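(* Let $\vec\omega_s=((e_1,m_1),\dots,(e_s,m_s))$ be the sequential random link sequence and let $(e_{s+1},m_{s+1})$ be the next link. For every $s\ge 0$, every $k\in\mathbb{N}$ and every realization of $\vec\omega_s$, the conditional probability (given $\vec\omega_s$) that in passing from $\vec\omega_s$ to $\vec\omega_{s+1}$ some cycle of $\vec\omega_s$ is split into two cycles at least one of which contains at most $k$ vertices is at most $2k/(n-1)$.
   Context: Complete graph $K_n$ with vertex set $V_n=\{1,\dots,n\}$, $n>2$, and edge set $E_n$ of unordered pairs of distinct vertices. Fix $\nu\in[0,1)$. A link is a pair $(e,m)$ with $e\in E_n$ and mark $m\in\{\text{cross},\text{bar}\}$. The sequential random sequence: $(e_1,m_1),(e_2,m_2),\dots$ are i.i.d., with $e_i$ uniform on $E_n$ and $m_i$ independent of $e_i$, equal to cross with probability $\nu$; $\vec\omega_s$ denotes the first $s$ of them. Cycles of a finite link sequence $((e_1,m_1),\dots,(e_s,m_s))$ are the cycles of the configuration $\{(e_i,\tfrac{i}{s+1},m_i)\}\subset E_n\times S^1\times\{\text{cross},\text{bar}\}$, where $S^1=[0,1)$ periodic, defined as follows. Loops: from $(v,\varphi)\in V_n\times S^1$ move along $\{v\}\times S^1$ in the positive direction; on reaching $(v,\varphi')$ where there is a link on $\{v,w\}$ at height $\varphi'$, jump to $(w,\varphi')$ and continue in the same direction if the link is a cross, reversed direction if a bar, until returning to the start. A cycle lists the successive visits $(v_1,0),\dots,(v_\ell,0)$ of a loop to $V_n\times\{0\}$ as $(v_1^{d_1},\dots,v_\ell^{d_\ell})$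 with $d_i\in\{\uparrow,\downarrow\}$ the direction of passage (positive/negative), up to rotation and overall reversal. The cycles partition $V_n$. When a link is appended, if its endpoints lie in different cycles these cycles merge into one; if they lie in the same cycle, that cycle either splits into two cycles or remains a single (restructured) cycle, depending on the mark and on the directions of the two endpoints in the cycle. *)

theory Defs
  imports "HOL-Probability.Probability"
begin

definition V :: "nat \<Rightarrow> nat set" where
  "V n = {1..n}"

definition E :: "nat \<Rightarrow> nat set set" where
  "E n = {{u, v} | u v. u \<in> V n \<and> v \<in> V n \<and> u \<noteq> v}"

datatype mark = Cross | Bar

type_synonym link = "nat set \<times> mark"

definition link_pmf :: "nat \<Rightarrow> real \<Rightarrow> link pmf" where
  "link_pmf n nu = pair_pmf (pmf_of_set (E n))
      (map_pmf (\<lambda>b. if b then Cross else Bar) (bernoulli_pmf nu))"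

text \<open>For a link sequence ws of length s, link i (1 \<le> i \<le> s,
  namely ws ! (i-1)) sits at height i/(s+1).  A state (v, j, d) means: on vertex v, inside the
  open height interval (j/(s+1), (j+1)/(s+1)) (0 \<le> j \<le> s), moving in direction d.
  The map loop_step moves to the next such interval along the loop.\<close>

datatype dir = Up | Down

definition other :: "nat set \<Rightarrow> nat \<Rightarrow> nat" where
  "other e v = (THE w. w \<in> e \<and> w \<noteq> v)"

fun loop_step :: "link list \<Rightarrow> nat \<times> nat \<times> dir \<Rightarrow> nat \<times> nat \<times> dir" where
  "loop_step ws (v, j, Up) =
     (if j = length ws then (v, 0, Up)
      else (case ws ! j of (e, m) \<Rightarrow>
              if v \<in> e then (case m of Cross \<Rightarrow> (other e v, Suc j, Up)
                                    | Bar \<Rightarrow> (other e v, j, Down))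
              else (v, Suc j, Up)))"
| "loop_step ws (v, j, Down) =
     (if j = 0 then (v, length ws, Down)
      else (case ws ! (j - 1) of (e, m) \<Rightarrow>
              if v \<in> e then (case m of Cross \<Rightarrow> (other e v, j - 1, Down)
                                    | Bar \<Rightarrow> (other e v, j, Up))
              else (v, j - 1, Down)))"

text \<open>The loop through (u,0), traversed in the positive direction starting just below height 0,
  visits (v,0) iff it reaches the state just before passing (v,0) upwards, (v, s, Up),
  or the state just before passing (v,0) downwards, (v, 0, Down).\<close>

definition same_cycle :: "link list \<Rightarrow> nat \<Rightarrow> nat \<Rightarrow> bool" where
  "same_cycle ws u v \<longleftrightarrow>
     (\<exists>t. (loop_step ws ^^ t) (u, length ws, Up) \<in> {(v, length ws, Up), (v, 0, Down)})"

definition cycles :: "nat \<Rightarrow> link list \<Rightarrow> nat set set" where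
  "cycles n ws = {{v \<in> V n. same_cycle ws u v} | u. u \<in> V n}"

definition splits_small :: "nat \<Rightarrow> link list \<Rightarrow> link \<Rightarrow> nat \<Rightarrow> bool" where
  "splits_small n ws l k \<longleftrightarrow>
     (\<exists>C \<in> cycles n ws. \<exists>C1 C2.
        C1 \<union> C2 = C \<and> C1 \<inter> C2 = {} \<and> C1 \<noteq> {} \<and> C2 \<noteq> {} \<and>
        cycles n (ws @ [l]) = (cycles n ws - {C}) \<union> {C1, C2} \<and>
        (card C1 \<le> k \<or> card C2 \<le> k))"

end

theory Submission
  imports Defs
begin

definition orb :: "('a \<Rightarrow> 'a) \<Rightarrow> 'a \<Rightarrow> 'a set" where
  "orb f x = range (\<lambda>i. (f ^^ i) x)"

definition sw :: "'a \<Rightarrow> 'a \<Rightarrow> 'a \<Rightarrow> 'a" where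
  "sw x y z = (if z = x then y else if z = y then x else z)"

lemma sw_comm: "sw x y = sw y x"
  by (auto simp: sw_def fun_eq_iff)

lemma orb_cong:
  assumes "\<And>z. z \<in> X \<Longrightarrow> f z = g z" "\<And>z. z \<in> X \<Longrightarrow> f z \<in> X" "x \<in> X"
  shows "orb f x = orb g x"
proof -
  have "(f ^^ i) x = (g ^^ i) x \<and> (f ^^ i) x \<in> X" for i
    by (induction i) (use assms in auto)
  then show ?thesis unfolding orb_def by auto
qed

lemma orb_self: "x \<in> orb f x"
  unfolding orb_def by (auto intro: range_eqI[where x=0])

lemma orb_step: "y \<in> orb f x \<Longrightarrow> f y \<in> orb f x"
proof -
  assume "y \<in> orb f x"
  then obtain i where "y = (f^^i) x" unfolding orb_def by auto
  then have "f y = (f^^(Suc i)) x" by simp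
  then show ?thesis unfolding orb_def by blast
qed

lemma orb_pow: "(f ^^ i) x \<in> orb f x"
  unfolding orb_def by auto

lemma orb_trans: "y \<in> orb f x \<Longrightarrow> z \<in> orb f y \<Longrightarrow> z \<in> orb f x"
proof -
  assume "y \<in> orb f x" "z \<in> orb f y"
  then obtain i j where "y = (f^^i) x" "z = (f^^j) y" unfolding orb_def by auto
  then have "z = (f^^(j+i)) x" by (simp add: funpow_add)
  then show ?thesis unfolding orb_def by auto
qed

lemma pow_split: "i \<le> j \<Longrightarrow> (f^^j) x = (f^^i) ((f^^(j-i)) x)"
proof -
  assume "i \<le> j"
  have "(f^^i) ((f^^(j-i)) x) = (f^^(i + (j-i))) x" by (simp add: funpow_add)
  then show ?thesis using \<open>i \<le> j\<close> by simp
qed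

lemma pow_mult_id: "(f ^^ p) x = x \<Longrightarrow> (f ^^ (q * p)) x = x"
  by (induction q) (auto simp: funpow_add)


lemma pow_mod: "(f ^^ p) x = x \<Longrightarrow> (f ^^ i) x = (f ^^ (i mod p)) x"
proof -
  assume a: "(f ^^ p) x = x"
  have "(f ^^ (i mod p)) ((f ^^ (i div p * p)) x) = (f ^^ (i mod p + i div p * p)) x"
    by (simp only: funpow_add comp_apply)
  also have "i mod p + i div p * p = i" by (rule mod_div_mult_eq)
  finally have "(f ^^ i) x = (f ^^ (i mod p)) ((f ^^ (i div p * p)) x)" by simp
  then show ?thesis using pow_mult_id[OF a] by simp
qed


lemma orb_cyc: assumes "(f ^^ p) x = x" "p > 0"
  shows "orb f x = (\<lambda>i. (f ^^ i) x) ` {1..p}"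
proof
  show "orb f x \<subseteq> (\<lambda>i. (f ^^ i) x) ` {1..p}"
  proof
    fix y assume "y \<in> orb f x"
    then obtain i where y: "y = (f ^^ i) x" unfolding orb_def by auto
    show "y \<in> (\<lambda>i. (f ^^ i) x) ` {1..p}"
    proof (cases "i mod p = 0")
      case True
      then show ?thesis using y pow_mod[OF assms(1), of i] assms by (auto intro!: image_eqI[of _ _ p])
    next
      case False
      then show ?thesis using y pow_mod[OF assms(1), of i] assms
        by (auto intro!: image_eqI[of _ _ "i mod p"] simp: Suc_leI)
    qed
  qed
qed (auto simp: orb_def)


lemma unchanged:
  assumes "x \<notin> orb f w" "y \<notin> orb f w"
  shows "orb (f \<circ> sw x y) w = orb f w"
proof -
  have "((f \<circ> sw x y) ^^ i) w = (f ^^ i) w" for i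
  proof (induction i)
    case (Suc i)
    have "(f^^i) w \<in> orb f w" by (rule orb_pow)
    then have "sw x y ((f^^i) w) = (f^^i) w" using assms by (auto simp: sw_def)
    then show ?case using Suc by simp
  qed simp
  then show ?thesis unfolding orb_def by simp
qed

lemma run:
  assumes "(f \<circ> sw x y) z = f w" "\<forall>i. 0 < i \<and> i < k \<longrightarrow> (f^^i) w \<noteq> x \<and> (f^^i) w \<noteq> y"
    "0 < j" "j \<le> k"
  shows "((f \<circ> sw x y)^^j) z = (f^^j) w"
  using assms(3,4)
proof (induction j)
  case 0 then show ?case by simp
next
  case (Suc j)
  show ?case
  proof (cases "j = 0")
    case True then show ?thesis using assms(1) by simp
  next
    case False
    have IH: "((f \<circ> sw x y)^^j) z = (f^^j) w" by (rule Suc.IH) (use False Suc.prems in auto)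
    have nxy: "(f^^j) w \<noteq> x \<and> (f^^j) w \<noteq> y" using assms(2) False Suc.prems by simp
    have "((f \<circ> sw x y)^^Suc j) z = f (sw x y (((f \<circ> sw x y)^^j) z))" by (simp only: funpow.simps(2) o_apply)
    also have "\<dots> = f (sw x y ((f^^j) w))" by (simp only: IH)
    also have "\<dots> = f ((f^^j) w)" using nxy by (simp add: sw_def)
    also have "\<dots> = (f^^Suc j) w" by simp
    finally show ?thesis .
  qed
qed

locale fperm =
  fixes X :: "'a set" and f :: "'a \<Rightarrow> 'a"
  assumes finX: "finite X" and clo: "\<And>x. x \<in> X \<Longrightarrow> f x \<in> X" and injf: "inj_on f X"
begin

lemma pow_in: "x \<in> X \<Longrightarrow> (f ^^ i) x \<in> X"
  by (induction i) (auto simp: clo)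

lemma orb_sub: "x \<in> X \<Longrightarrow> orb f x \<subseteq> X"
  unfolding orb_def using pow_in by auto

lemma pow_eq: "x \<in> X \<Longrightarrow> y \<in> X \<Longrightarrow> (f ^^ i) x = (f ^^ i) y \<Longrightarrow> x = y"
proof (induction i arbitrary: x y)
  case 0 then show ?case by simp
next
  case (Suc i)
  have "f x = f y" using Suc.prems Suc.IH[of "f x" "f y"] clo
    by (simp add: funpow_Suc_right del: funpow.simps)
  then show ?case using injf Suc.prems by (auto dest: inj_onD)
qed

lemma ex_period: assumes "x \<in> X" shows "\<exists>p>0. (f ^^ p) x = x"
proof -
  have ninj: "\<not> inj_on (\<lambda>i. (f ^^ i) x) {..card X}"
  proof
    assume a: "inj_on (\<lambda>i. (f ^^ i) x) {..card X}"
    have "(\<lambda>i. (f ^^ i) x) ` {..card X} \<subseteq> X" using pow_in assms by auto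
    then have "card ((\<lambda>i. (f ^^ i) x) ` {..card X}) \<le> card X" using finX card_mono by blast
    then show False using card_image[OF a] by simp
  qed
  then obtain i j where ij: "i \<noteq> j" "(f^^i) x = (f^^j) x" by (auto simp: inj_on_def)
  have *: "\<exists>p>0. (f ^^ p) x = x" if "i < j" "(f^^i) x = (f^^j) x" for i j
  proof -
    have "(f^^j) x = (f^^i) ((f^^(j-i)) x)" using that by (intro pow_split) simp
    then have "(f^^i) x = (f^^i) ((f^^(j-i)) x)" using that by simp
    then have "x = (f^^(j-i)) x" by (rule pow_eq[OF assms pow_in[OF assms]])
    moreover have "j - i > 0" using that by simp
    ultimately show ?thesis by metis
  qed
  show ?thesis using ij *[of i j] *[of j i] by (cases "i < j") auto
qed

definition per :: "'a \<Rightarrow> nat" where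
  "per x = (LEAST p. p > 0 \<and> (f ^^ p) x = x)"

lemma per: assumes "x \<in> X" shows "per x > 0" "(f ^^ per x) x = x"
  using LeastI_ex[OF ex_period[OF assms]] unfolding per_def by auto

lemma per_min: "0 < q \<Longrightarrow> q < per x \<Longrightarrow> (f ^^ q) x \<noteq> x"
  unfolding per_def using not_less_Least by blast

lemma orb_sym: assumes "x \<in> X" "y \<in> orb f x" shows "x \<in> orb f y"
proof -
  obtain i where y: "y = (f ^^ i) x" using assms unfolding orb_def by auto
  obtain p where p: "p > 0" "(f ^^ p) x = x" using ex_period assms by blast
  have le: "i \<le> p * Suc i" using p(1) by (simp add: trans_le_add2)
  have "(f ^^ (p * Suc i - i)) y = (f ^^ (p * Suc i - i + i)) x" using y
    by (simp add: funpow_add)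
  also have "\<dots> = (f ^^ (p * Suc i)) x" using le by simp
  also have "\<dots> = x" using pow_mult_id[OF p(2), of "Suc i"] by (simp add: mult.commute)
  finally show ?thesis using orb_pow by metis
qed

lemma orb_eq: "x \<in> X \<Longrightarrow> y \<in> orb f x \<Longrightarrow> orb f y = orb f x"
  using orb_trans orb_sym by (metis subsetI subset_antisym)

lemma orb_disj: "x \<in> X \<Longrightarrow> y \<in> X \<Longrightarrow> z \<in> orb f x \<Longrightarrow> z \<in> orb f y \<Longrightarrow> orb f x = orb f y"
  using orb_eq orb_sub by (metis subsetD)

lemma inj_per: assumes "x \<in> X" shows "inj_on (\<lambda>i. (f ^^ i) x) {1..per x}"
proof (rule inj_onI)
  fix i j assume ij: "i \<in> {1..per x}" "j \<in> {1..per x}" "(f ^^ i) x = (f ^^ j) x"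
  have *: False if "i < j" "i \<in> {1..per x}" "j \<in> {1..per x}" "(f ^^ i) x = (f ^^ j) x" for i j
  proof -
    have "(f^^j) x = (f^^i) ((f^^(j-i)) x)" using that by (intro pow_split) simp
    then have "(f^^i) x = (f^^i) ((f^^(j-i)) x)" using that by simp
    then have "x = (f^^(j-i)) x" by (rule pow_eq[OF assms pow_in[OF assms]])
    moreover have "j - i < per x" "0 < j - i" using that by auto
    ultimately show False using per_min[of "j-i" x] by simp
  qed
  show "i = j"
  proof (cases i j rule: linorder_cases)
    case less then show ?thesis using *[of i j] ij by blast
  next
    case greater then show ?thesis using *[of j i] ij by simp
  qed
qed


lemma sw_in: "x \<in> X \<Longrightarrow> y \<in> X \<Longrightarrow> z \<in> X \<Longrightarrow> sw x y z \<in> X"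
  by (simp add: sw_def)

lemma fperm_sw: assumes "x \<in> X" "y \<in> X" shows "fperm X (f \<circ> sw x y)"
proof
  show "finite X" by (rule finX)
  show "(f \<circ> sw x y) z \<in> X" if "z \<in> X" for z using that assms clo sw_in by simp
  have "inj_on (sw x y) X" by (auto simp: inj_on_def sw_def split: if_splits)
  moreover have "sw x y ` X \<subseteq> X" using assms sw_in by auto
  ultimately show "inj_on (f \<circ> sw x y) X" using injf by (meson comp_inj_on inj_on_subset)
qed

lemma split_arc:
  assumes "x \<in> X" "x \<noteq> y" "(f^^d) x = y" "\<forall>j<d. (f^^j) x \<noteq> y"
  shows "orb (f \<circ> sw x y) y = (\<lambda>j. (f^^j) x) ` {1..d}"
proof -
  let ?h = "f \<circ> sw x y"
  have d0: "d > 0" using assms by (cases d) auto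
  have y: "y \<in> X" using assms pow_in by blast
  have nx: "(f^^j) x \<noteq> x" if "0 < j" "j < d" for j
  proof
    assume a: "(f^^j) x = x"
    have "(f^^d) x = (f^^(d-j)) ((f^^(d-(d-j))) x)" by (rule pow_split) simp
    then have "(f^^(d-j)) x = y" using assms(3) a that by simp
    moreover have "d - j < d" using that by simp
    ultimately show False using assms(4) by blast
  qed
  have h1: "?h y = f x" using assms(2) by (simp add: sw_def)
  have key: "(?h^^j) y = (f^^j) x" if "0 < j" "j \<le> d" for j
    by (rule run[OF h1 _ that]) (use nx assms(4) in auto)
  have "(?h^^d) y = y" using key[of d] d0 assms(3) by simp
  then have "orb ?h y = (\<lambda>j. (?h^^j) y) ` {1..d}" by (rule orb_cyc[OF _ d0])
  also have "\<dots> = (\<lambda>j. (f^^j) x) ` {1..d}" using key by (intro image_cong) auto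
  finally show ?thesis .
qed

lemma split_arc2:
  assumes "x \<in> X" "x \<noteq> y" "(f^^d) x = y" "\<forall>j<d. (f^^j) x \<noteq> y"
  shows "orb (f \<circ> sw x y) x = orb f x - orb (f \<circ> sw x y) y"
proof -
  let ?p = "per x"
  have p: "?p > 0" "(f^^?p) x = x" using per assms(1) by auto
  have d0: "0 < d" using assms by (cases d) auto
  have dp: "d < ?p"
  proof (rule ccontr)
    assume a: "\<not> d < ?p"
    have "(f^^d) x = (f^^(d-?p)) ((f^^(d-(d-?p))) x)" by (rule pow_split) simp
    then have "(f^^(d-?p)) x = y" using a p assms(3) by simp
    moreover have "d - ?p < d" using p(1) d0 by simp
    ultimately show False using assms(4) by blast
  qed
  let ?d' = "?p - d"
  have y: "y \<in> X" using assms pow_in by blast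
  have yd: "(f^^j) y = (f^^(j+d)) x" for j using assms(3) by (simp add: funpow_add)
  have "(f^^?d') y = x" using yd[of ?d'] dp p by simp
  moreover have "\<forall>j<?d'. (f^^j) y \<noteq> x"
  proof (intro allI impI)
    fix j assume "j < ?d'"
    then show "(f^^j) y \<noteq> x" using yd[of j] per_min[of "j+d" x] d0 by simp
  qed
  ultimately have "orb (f \<circ> sw y x) x = (\<lambda>j. (f^^j) y) ` {1..?d'}"
    using split_arc[of y x ?d'] y assms(2) by simp
  then have A: "orb (f \<circ> sw x y) x = (\<lambda>j. (f^^j) y) ` {1..?d'}" by (simp add: sw_comm)
  have B: "orb (f \<circ> sw x y) y = (\<lambda>j. (f^^j) x) ` {1..d}" by (rule split_arc[OF assms])
  have C: "orb f x = (\<lambda>j. (f^^j) x) ` {1..?p}" by (rule orb_cyc[OF p(2) p(1)])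
  have "(\<lambda>j. (f^^j) x) ` {1..?p} - (\<lambda>j. (f^^j) x) ` {1..d} = (\<lambda>j. (f^^j) x) ` ({1..?p} - {1..d})"
    using inj_on_image_set_diff[OF inj_per[OF assms(1)]] dp by auto
  also have "{1..?p} - {1..d} = (\<lambda>j. j + d) ` {1..?d'}"
  proof -
    have "{1..?p} - {1..d} = {Suc d..?p}" using d0 by auto
    also have "\<dots> = (\<lambda>j. j + d) ` {1..?d'}"
    proof
      show "{Suc d..?p} \<subseteq> (\<lambda>j. j + d) ` {1..?d'}"
      proof
        fix i assume "i \<in> {Suc d..?p}"
        then show "i \<in> (\<lambda>j. j + d) ` {1..?d'}" by (intro image_eqI[of _ _ "i - d"]) auto
      qed
    qed auto
    finally show ?thesis .
  qed
  also have "(\<lambda>j. (f^^j) x) ` ((\<lambda>j. j + d) ` {1..?d'}) = (\<lambda>j. (f^^j) y) ` {1..?d'}"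
    unfolding image_image by (rule image_cong[OF refl]) (simp add: yd)
  finally show ?thesis using A B C by simp
qed

lemma split_both:
  assumes "x \<in> X" "y \<in> orb f x" "x \<noteq> y"
  shows "orb (f \<circ> sw x y) x \<union> orb (f \<circ> sw x y) y = orb f x"
    "orb (f \<circ> sw x y) x \<inter> orb (f \<circ> sw x y) y = {}"
proof -
  obtain i where "(f^^i) x = y" using assms(2) unfolding orb_def by auto
  define d where "d = (LEAST d. (f^^d) x = y)"
  have d: "(f^^d) x = y" unfolding d_def by (rule LeastI[of _ i]) fact
  have dm: "\<forall>j<d. (f^^j) x \<noteq> y" unfolding d_def using not_less_Least by blast
  have B: "orb (f \<circ> sw x y) y = (\<lambda>j. (f^^j) x) ` {1..d}" by (rule split_arc[OF assms(1,3) d dm])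
  have "orb (f \<circ> sw x y) y \<subseteq> orb f x" unfolding B by (auto simp: orb_def)
  then show "orb (f \<circ> sw x y) x \<union> orb (f \<circ> sw x y) y = orb f x"
    "orb (f \<circ> sw x y) x \<inter> orb (f \<circ> sw x y) y = {}"
    using split_arc2[OF assms(1,3) d dm] by auto
qed

lemma merge:
  assumes "x \<in> X" "y \<in> X" "y \<notin> orb f x"
  shows "orb (f \<circ> sw x y) x = orb f x \<union> orb f y"
proof -
  let ?h = "f \<circ> sw x y"
  have xny: "x \<notin> orb f y" using orb_sym assms by blast
  have neq: "x \<noteq> y" using assms orb_self by metis
  let ?px = "per x" let ?py = "per y"
  have px: "?px > 0" "(f^^?px) x = x" using per assms by auto
  have py: "?py > 0" "(f^^?py) y = y" using per assms by auto
  have h1: "?h x = f y" by (simp add: sw_def)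
  have A: "(?h^^j) x = (f^^j) y" if "0 < j" "j \<le> ?py" for j
  proof (rule run[OF h1 _ that], intro allI impI)
    fix i assume "0 < i \<and> i < ?py"
    then show "(f^^i) y \<noteq> x \<and> (f^^i) y \<noteq> y" using per_min[of i y] orb_pow[where f=f and i=i and x=y] xny by auto
  qed
  have h2: "?h y = f x" using neq by (simp add: sw_def)
  have B0: "(?h^^j) y = (f^^j) x" if "0 < j" "j \<le> ?px" for j
  proof (rule run[OF h2 _ that], intro allI impI)
    fix i assume "0 < i \<and> i < ?px"
    then show "(f^^i) x \<noteq> x \<and> (f^^i) x \<noteq> y" using per_min[of i x] orb_pow[where f=f and i=i and x=x] assms(3) by auto
  qed
  have hy: "(?h^^?py) x = y" using A[of ?py] py by simp
  have B: "(?h^^(j + ?py)) x = (f^^j) x" if "0 < j" "j \<le> ?px" for j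
    using B0[OF that] hy by (simp add: funpow_add)
  have "(?h^^(?px + ?py)) x = x" using B[of ?px] px by simp
  then have O: "orb ?h x = (\<lambda>i. (?h^^i) x) ` {1..?px + ?py}" by (rule orb_cyc) (use px in simp_all)
  show ?thesis
  proof
    show "orb ?h x \<subseteq> orb f x \<union> orb f y"
    proof
      fix z assume "z \<in> orb ?h x"
      then obtain i where i: "i \<in> {1..?px + ?py}" "z = (?h^^i) x" using O by auto
      show "z \<in> orb f x \<union> orb f y"
      proof (cases "i \<le> ?py")
        case True then show ?thesis using A[of i] i by (simp add: orb_pow)
      next
        case False
        then have "z = (f^^(i - ?py)) x" using B[of "i - ?py"] i by simp
        then show ?thesis using orb_pow by auto
      qed
    qed
    show "orb f x \<union> orb f y \<subseteq> orb ?h x"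
    proof
      fix z assume "z \<in> orb f x \<union> orb f y"
      then show "z \<in> orb ?h x"
      proof
        assume "z \<in> orb f x"
        then obtain j where "j \<in> {1..?px}" "z = (f^^j) x" using orb_cyc[OF px(2) px(1)] by auto
        then show ?thesis using B[of j] orb_pow by (metis atLeastAtMost_iff less_eq_Suc_le One_nat_def)
      next
        assume "z \<in> orb f y"
        then obtain j where "j \<in> {1..?py}" "z = (f^^j) y" using orb_cyc[OF py(2) py(1)] by auto
        then show ?thesis using A[of j] orb_pow by (metis atLeastAtMost_iff less_eq_Suc_le One_nat_def)
      qed
    qed
  qed
qed

end

definition valid :: "nat \<Rightarrow> link list \<Rightarrow> bool" where
  "valid n L \<longleftrightarrow> (\<forall>l\<in>set L. fst l \<in> E n \<or> fst l = {})"

definition XS :: "nat \<Rightarrow> nat \<Rightarrow> (nat \<times> nat \<times> dir) set" where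
  "XS n N = V n \<times> {..N} \<times> UNIV"

fun flipd :: "dir \<Rightarrow> dir" where "flipd Up = Down" | "flipd Down = Up"

fun rho :: "nat \<times> nat \<times> dir \<Rightarrow> nat \<times> nat \<times> dir" where
  "rho (v,j,d) = (v,j,flipd d)"

definition Vset :: "nat \<Rightarrow> nat \<Rightarrow> (nat \<times> nat \<times> dir) set \<Rightarrow> nat set" where
  "Vset n N Q = {v \<in> V n. (v,N,Up) \<in> Q \<or> (v,0,Down) \<in> Q}"

lemma dir_UNIV: "(UNIV :: dir set) = {Up, Down}"
  using dir.exhaust by auto

lemma finite_XS: "finite (XS n N)"
  unfolding XS_def V_def dir_UNIV by simp

lemma rho_rho[simp]: "rho (rho x) = x"
proof (cases x)
  case (fields v j d) then show ?thesis by (cases d) auto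
qed

lemma rho_ne: "rho x \<noteq> x"
proof (cases x)
  case (fields v j d) then show ?thesis by (cases d) auto
qed

lemma rho_XS: "x \<in> XS n N \<Longrightarrow> rho x \<in> XS n N"
  by (cases x) (auto simp: XS_def)

lemma other_eq: "u \<noteq> w \<Longrightarrow> other {u,w} u = w"
  unfolding other_def by (rule the_equality) auto

lemma other_props:
  assumes "e \<in> E n" "v \<in> e"
  shows "other e v \<in> V n" "other e v \<noteq> v" "other e (other e v) = v" "other e v \<in> e"
proof -
  obtain u w where e: "e = {u,w}" "u \<in> V n" "w \<in> V n" "u \<noteq> w" using assms(1) unfolding E_def by auto
  have "v = u \<or> v = w" using assms(2) e by auto
  then show "other e v \<in> V n" "other e v \<noteq> v" "other e (other e v) = v" "other e v \<in> e"
    using e other_eq[of u w] other_eq[of w u] by (auto simp: insert_commute)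
qed

locale lseq =
  fixes n :: nat and L :: "link list"
  assumes val: "valid n L"
begin

lemma edge:
  assumes "j < length L" "L ! j = (e,m)" "v \<in> e"
  shows "other e v \<in> V n" "other e v \<noteq> v" "other e (other e v) = v" "other e v \<in> e"
proof -
  have "(e,m) \<in> set L" using assms(1,2) nth_mem by metis
  then have "e \<in> E n" using val assms(3) unfolding valid_def by fastforce
  then show "other e v \<in> V n" "other e v \<noteq> v" "other e (other e v) = v" "other e v \<in> e"
    using other_props assms(3) by auto
qed

lemma F_in: assumes "x \<in> XS n (length L)" shows "loop_step L x \<in> XS n (length L)"
proof -
  obtain v j d where x: "x = (v,j,d)" by (cases x)
  have v: "v \<in> V n" and j: "j \<le> length L" using assms x by (auto simp: XS_def)
  show ?thesis
  proof (cases d)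
    case Up
    show ?thesis
    proof (cases "j = length L")
      case True then show ?thesis using x Up v by (simp add: XS_def)
    next
      case False
      obtain e m where em: "L ! j = (e,m)" by (cases "L ! j")
      have jl: "j < length L" using j False by simp
      show ?thesis using x Up v em jl edge[OF jl em] by (cases m) (auto simp: XS_def Suc_le_eq)
    qed
  next
    case Down
    show ?thesis
    proof (cases "j = 0")
      case True then show ?thesis using x Down v by (simp add: XS_def)
    next
      case False
      obtain e m where em: "L ! (j-1) = (e,m)" by (cases "L ! (j-1)")
      have jl: "j - 1 < length L" using j False by simp
      show ?thesis using x Down v j em jl edge[OF jl em] by (cases m) (auto simp: XS_def)
    qed
  qed
qed

lemma F_rho: assumes "x \<in> XS n (length L)" shows "loop_step L (rho (loop_step L x)) = rho x"
proof -
  obtain v j d where x: "x = (v,j,d)" by (cases x)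
  have v: "v \<in> V n" and j: "j \<le> length L" using assms x by (auto simp: XS_def)
  show ?thesis
  proof (cases d)
    case Up
    show ?thesis
    proof (cases "j = length L")
      case True then show ?thesis using x Up v by simp
    next
      case False
      obtain e m where em: "L ! j = (e,m)" by (cases "L ! j")
      have jl: "j < length L" using j False by simp
      show ?thesis using x Up v em jl edge[OF jl em] by (cases m) auto
    qed
  next
    case Down
    show ?thesis
    proof (cases "j = 0")
      case True then show ?thesis using x Down v by simp
    next
      case False
      obtain e m where em: "L ! (j-1) = (e,m)" by (cases "L ! (j-1)")
      have jl: "j - 1 < length L" using j False by simp
      show ?thesis using x Down v j False em jl edge[OF jl em] by (cases m) auto
    qed
  qed
qed

lemma F_ne_rho: assumes "x \<in> XS n (length L)" shows "loop_step L x \<noteq> rho x"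
proof -
  obtain v j d where x: "x = (v,j,d)" by (cases x)
  have v: "v \<in> V n" and j: "j \<le> length L" using assms x by (auto simp: XS_def)
  show ?thesis
  proof (cases d)
    case Up
    show ?thesis
    proof (cases "j = length L")
      case True then show ?thesis using x Up v by simp
    next
      case False
      obtain e m where em: "L ! j = (e,m)" by (cases "L ! j")
      have jl: "j < length L" using j False by simp
      show ?thesis using x Up v em jl edge[OF jl em] by (cases m) auto
    qed
  next
    case Down
    show ?thesis
    proof (cases "j = 0")
      case True then show ?thesis using x Down v by simp
    next
      case False
      obtain e m where em: "L ! (j-1) = (e,m)" by (cases "L ! (j-1)")
      have jl: "j - 1 < length L" using j False by simp
      show ?thesis using x Down v j False em jl edge[OF jl em] by (cases m) auto
    qed
  qed
qed

lemma is_fperm: "fperm (XS n (length L)) (loop_step L)"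
proof
  show "finite (XS n (length L))" by (rule finite_XS)
  show "loop_step L x \<in> XS n (length L)" if "x \<in> XS n (length L)" for x using F_in that .
  show "inj_on (loop_step L) (XS n (length L))"
  proof (rule inj_onI)
    fix x y assume "x \<in> XS n (length L)" "y \<in> XS n (length L)" "loop_step L x = loop_step L y"
    then have "rho x = rho y" using F_rho by metis
    then show "x = y" by (metis rho_rho)
  qed
qed

end

sublocale lseq \<subseteq> fperm "XS n (length L)" "loop_step L" by (rule is_fperm)

context lseq begin

lemma pow_rho: "x \<in> XS n (length L) \<Longrightarrow> (loop_step L ^^ i) (rho ((loop_step L ^^ i) x)) = rho x"
proof (induction i arbitrary: x)
  case 0 then show ?case by simp
next
  case (Suc i)
  have "(loop_step L ^^ Suc i) (rho ((loop_step L ^^ Suc i) x))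
      = (loop_step L ^^ i) (loop_step L (rho (loop_step L ((loop_step L ^^ i) x))))"
    by (simp add: funpow_swap1)
  also have "loop_step L (rho (loop_step L ((loop_step L ^^ i) x))) = rho ((loop_step L ^^ i) x)"
    by (rule F_rho[OF pow_in[OF Suc.prems]])
  finally show ?case using Suc.IH[OF Suc.prems] by simp
qed

lemma parity: assumes "x \<in> XS n (length L)" shows "rho x \<notin> orb (loop_step L) x"
proof
  assume "rho x \<in> orb (loop_step L) x"
  then obtain t where t: "(loop_step L ^^ t) x = rho x" by (auto simp: orb_def)
  have key: "rho ((loop_step L ^^ i) x) = (loop_step L ^^ (t-i)) x" if "i \<le> t" for i
  proof -
    have "(loop_step L ^^ i) (rho ((loop_step L ^^ i) x)) = rho x" by (rule pow_rho[OF assms])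
    also have "\<dots> = (loop_step L ^^ i) ((loop_step L ^^ (t-i)) x)"
      using t pow_split[OF that, of "loop_step L" x] by simp
    finally show ?thesis by (rule pow_eq[OF rho_XS[OF pow_in[OF assms]] pow_in[OF assms]])
  qed
  show False
  proof (cases "even t")
    case True
    then obtain i where i: "t = 2 * i" by auto
    then have "rho ((loop_step L ^^ i) x) = (loop_step L ^^ i) x" using key[of i] by simp
    then show False using rho_ne by metis
  next
    case False
    then obtain i where i: "t = 2 * i + 1" by (metis oddE)
    then have "rho ((loop_step L ^^ i) x) = loop_step L ((loop_step L ^^ i) x)" using key[of i] by simp
    then show False using F_ne_rho[OF pow_in[OF assms]] by metis
  qed
qed

lemma orb_rho_sub: assumes "x \<in> XS n (length L)"
  shows "rho ` orb (loop_step L) x \<subseteq> orb (loop_step L) (rho x)"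
proof
  fix z assume "z \<in> rho ` orb (loop_step L) x"
  then obtain i where z: "z = rho ((loop_step L ^^ i) x)" by (auto simp: orb_def)
  have "rho x \<in> orb (loop_step L) z" using pow_rho[OF assms, of i] z orb_pow by metis
  moreover have "z \<in> XS n (length L)" using z rho_XS pow_in assms by simp
  ultimately show "z \<in> orb (loop_step L) (rho x)" using orb_sym by blast
qed

lemma orb_rho: assumes "x \<in> XS n (length L)"
  shows "orb (loop_step L) (rho x) = rho ` orb (loop_step L) x"
proof
  show "rho ` orb (loop_step L) x \<subseteq> orb (loop_step L) (rho x)" by (rule orb_rho_sub[OF assms])
  have "rho ` orb (loop_step L) (rho x) \<subseteq> orb (loop_step L) x"
    using orb_rho_sub[OF rho_XS[OF assms]] by simp
  then show "orb (loop_step L) (rho x) \<subseteq> rho ` orb (loop_step L) x"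
  proof -
    assume h: "rho ` orb (loop_step L) (rho x) \<subseteq> orb (loop_step L) x"
    show ?thesis
    proof
      fix z assume "z \<in> orb (loop_step L) (rho x)"
      then have "rho z \<in> orb (loop_step L) x" using h by blast
      then show "z \<in> rho ` orb (loop_step L) x" by (rule image_eqI[of z rho "rho z", rotated]) simp
    qed
  qed
qed

lemma F_U[simp]: "loop_step L (v, length L, Up) = (v, 0, Up)" by simp
lemma F_D[simp]: "loop_step L (v, 0, Down) = (v, length L, Down)" by simp

lemma Vset_rho_sub: assumes "x \<in> XS n (length L)"
  shows "Vset n (length L) (orb (loop_step L) x) \<subseteq> Vset n (length L) (orb (loop_step L) (rho x))"
proof
  fix v assume "v \<in> Vset n (length L) (orb (loop_step L) x)"
  then have v: "v \<in> V n" and dj: "(v, length L, Up) \<in> orb (loop_step L) x \<or> (v,0,Down) \<in> orb (loop_step L) x"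
    by (auto simp: Vset_def)
  from dj show "v \<in> Vset n (length L) (orb (loop_step L) (rho x))"
  proof
    assume "(v, length L, Up) \<in> orb (loop_step L) x"
    then have "(v, 0, Up) \<in> orb (loop_step L) x" using orb_step by fastforce
    then have "rho (v,0,Up) \<in> orb (loop_step L) (rho x)" using orb_rho[OF assms] by blast
    then show ?thesis using v by (simp add: Vset_def)
  next
    assume "(v, 0, Down) \<in> orb (loop_step L) x"
    then have "(v, length L, Down) \<in> orb (loop_step L) x" using orb_step by fastforce
    then have "rho (v,length L,Down) \<in> orb (loop_step L) (rho x)" using orb_rho[OF assms] by blast
    then show ?thesis using v by (simp add: Vset_def)
  qed
qed

lemma Vset_rho: assumes "x \<in> XS n (length L)"
  shows "Vset n (length L) (orb (loop_step L) (rho x)) = Vset n (length L) (orb (loop_step L) x)"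
  using Vset_rho_sub[OF assms] Vset_rho_sub[OF rho_XS[OF assms]] by simp

lemma node_excl: assumes "x \<in> XS n (length L)"
  shows "\<not> ((v, length L, Up) \<in> orb (loop_step L) x \<and> (v,0,Down) \<in> orb (loop_step L) x)"
proof
  assume a: "(v, length L, Up) \<in> orb (loop_step L) x \<and> (v,0,Down) \<in> orb (loop_step L) x"
  then have w: "(v, 0, Up) \<in> orb (loop_step L) x" using orb_step by fastforce
  then have wX: "(v,0,Up) \<in> XS n (length L)" using orb_sub[OF assms] by blast
  have "orb (loop_step L) (v,0,Up) = orb (loop_step L) x" by (rule orb_eq[OF assms w])
  then have "rho (v,0,Up) \<in> orb (loop_step L) (v,0,Up)" using a by simp
  then show False using parity[OF wX] by simp
qed

lemma same_cycle_iff: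
  "same_cycle L u v \<longleftrightarrow> (v, length L, Up) \<in> orb (loop_step L) (u, length L, Up)
     \<or> (v, 0, Down) \<in> orb (loop_step L) (u, length L, Up)"
  unfolding same_cycle_def orb_def by (auto simp: image_iff) metis+

lemma cycles_eq: "cycles n L = {Vset n (length L) (orb (loop_step L) (u, length L, Up)) | u. u \<in> V n}"
  unfolding cycles_def Vset_def same_cycle_iff by simp

lemma U_XS: "u \<in> V n \<Longrightarrow> (u, length L, Up) \<in> XS n (length L)"
  by (simp add: XS_def)

lemma cyc_self: "u \<in> V n \<Longrightarrow> u \<in> Vset n (length L) (orb (loop_step L) (u, length L, Up))"
  by (simp add: Vset_def orb_self)

lemma cyc_eq:
  assumes "u' \<in> V n" "u \<in> Vset n (length L) (orb (loop_step L) (u', length L, Up))"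
  shows "Vset n (length L) (orb (loop_step L) (u, length L, Up)) = Vset n (length L) (orb (loop_step L) (u', length L, Up))"
proof -
  let ?O = "orb (loop_step L) (u', length L, Up)"
  have u': "(u', length L, Up) \<in> XS n (length L)" using assms by (simp add: XS_def)
  have "(u, length L, Up) \<in> ?O \<or> (u, 0, Down) \<in> ?O" using assms by (simp add: Vset_def)
  then show ?thesis
  proof
    assume "(u, length L, Up) \<in> ?O"
    then show ?thesis using orb_eq[OF u'] by simp
  next
    assume "(u, 0, Down) \<in> ?O"
    then have "(u, length L, Down) \<in> ?O" using orb_step by fastforce
    then have "rho (u, length L, Down) \<in> orb (loop_step L) (rho (u', length L, Up))"
      using orb_rho[OF u'] by blast
    then have "orb (loop_step L) (u, length L, Up) = orb (loop_step L) (rho (u', length L, Up))"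
      using orb_eq[OF rho_XS[OF u']] by simp
    then show ?thesis using Vset_rho[OF u'] by simp
  qed
qed

end

definition pj :: "nat \<Rightarrow> nat \<times> nat \<times> dir \<Rightarrow> nat \<times> nat \<times> dir" where
  "pj s x = (case x of (v,j,d) \<Rightarrow> if j = Suc s then (if d = Up then (v,s,Up) else (v,0,Down)) else x)"

lemma pj_id: "x \<in> XS n s \<Longrightarrow> pj s x = x"
  by (cases x) (auto simp: pj_def XS_def)

lemma pj_XS: "x \<in> XS n (Suc s) \<Longrightarrow> pj s x \<in> XS n s"
  by (cases x) (auto simp: pj_def XS_def)

lemma valid_app: "valid n ws \<Longrightarrow> (fst l \<in> E n \<or> fst l = {}) \<Longrightarrow> valid n (ws @ [l])"
  by (auto simp: valid_def)

locale wsctx =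
  fixes n :: nat and ws :: "link list"
  assumes valws: "valid n ws"
begin

abbreviation "ws0 \<equiv> ws @ [({}, Cross)]"

sublocale A: lseq n ws by (unfold_locales) (rule valws)
sublocale B: lseq n ws0 by (unfold_locales) (rule valid_app[OF valws], simp)

lemma sim_step:
  assumes "x \<in> XS n (Suc (length ws))"
  shows "pj (length ws) (loop_step ws0 x) = loop_step ws (pj (length ws) x) \<or>
    (pj (length ws) (loop_step ws0 x) = pj (length ws) x \<and>
     pj (length ws) (loop_step ws0 (loop_step ws0 x)) = loop_step ws (pj (length ws) x))"
proof -
  let ?s = "length ws"
  obtain v j d where x: "x = (v,j,d)" by (cases x)
  have v: "v \<in> V n" and j: "j \<le> Suc ?s" using assms x by (auto simp: XS_def)
  show ?thesis
  proof (cases d)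
    case Up
    show ?thesis
    proof (cases "j = Suc ?s")
      case True then show ?thesis using x Up by (simp add: pj_def)
    next
      case False
      show ?thesis
      proof (cases "j = ?s")
        case True then show ?thesis using x Up by (simp add: pj_def nth_append)
      next
        case False
        then have jl: "j < ?s" using j \<open>j \<noteq> Suc ?s\<close> by simp
        have eq: "loop_step ws0 x = loop_step ws x" using x Up jl by (simp add: nth_append)
        have xin: "x \<in> XS n ?s" using x v jl by (simp add: XS_def)
        show ?thesis using eq pj_id[OF A.F_in[OF xin]] pj_id[OF xin] by simp
      qed
    qed
  next
    case Down
    show ?thesis
    proof (cases "j = 0")
      case True then show ?thesis using x Down by (simp add: pj_def nth_append)
    next
      case False
      show ?thesis
      proof (cases "j = Suc ?s")
        case True then show ?thesis using x Down by (simp add: pj_def nth_append)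
      next
        case False
        then have jl: "j \<le> ?s" "j \<noteq> 0" "j - 1 < ?s" using j \<open>j \<noteq> 0\<close> by auto
        have eq: "loop_step ws0 x = loop_step ws x" using x Down jl by (simp add: nth_append)
        have xin: "x \<in> XS n ?s" using x v jl by (simp add: XS_def)
        show ?thesis using eq pj_id[OF A.F_in[OF xin]] pj_id[OF xin] by simp
      qed
    qed
  qed
qed

lemma sim_fwd:
  assumes "x \<in> XS n (Suc (length ws))"
  shows "pj (length ws) ((loop_step ws0 ^^ t) x) \<in> orb (loop_step ws) (pj (length ws) x)"
proof (induction t)
  case 0 then show ?case by (simp add: orb_self)
next
  case (Suc t)
  have xin: "(loop_step ws0 ^^ t) x \<in> XS n (Suc (length ws))" using B.pow_in assms by simp
  from sim_step[OF xin] Suc.IH orb_step show ?case by fastforce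
qed

lemma sim_bwd:
  assumes "x \<in> XS n (Suc (length ws))"
  shows "\<exists>t'. pj (length ws) ((loop_step ws0 ^^ t') x) = (loop_step ws ^^ t) (pj (length ws) x)"
proof (induction t)
  case 0 then show ?case by (metis funpow_0)
next
  case (Suc t)
  then obtain t' where t': "pj (length ws) ((loop_step ws0 ^^ t') x) = (loop_step ws ^^ t) (pj (length ws) x)" by blast
  have xin: "(loop_step ws0 ^^ t') x \<in> XS n (Suc (length ws))" using B.pow_in assms by simp
  from sim_step[OF xin] show ?case
  proof
    assume "pj (length ws) (loop_step ws0 ((loop_step ws0 ^^ t') x)) = loop_step ws (pj (length ws) ((loop_step ws0 ^^ t') x))"
    then have "pj (length ws) ((loop_step ws0 ^^ Suc t') x) = (loop_step ws ^^ Suc t) (pj (length ws) x)"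
      using t' by simp
    then show ?thesis by blast
  next
    assume "pj (length ws) (loop_step ws0 ((loop_step ws0 ^^ t') x)) = pj (length ws) ((loop_step ws0 ^^ t') x) \<and>
     pj (length ws) (loop_step ws0 (loop_step ws0 ((loop_step ws0 ^^ t') x))) = loop_step ws (pj (length ws) ((loop_step ws0 ^^ t') x))"
    then have "pj (length ws) ((loop_step ws0 ^^ Suc (Suc t')) x) = (loop_step ws ^^ Suc t) (pj (length ws) x)"
      using t' by simp
    then show ?thesis by blast
  qed
qed

lemma same_cycle_ws0:
  assumes "u \<in> V n"
  shows "same_cycle ws0 u v \<longleftrightarrow> same_cycle ws u v"
proof -
  let ?s = "length ws"
  let ?x = "(u, Suc ?s, Up)"
  have xin: "?x \<in> XS n (Suc ?s)" using assms by (simp add: XS_def)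
  have px: "pj ?s ?x = (u, ?s, Up)" by (simp add: pj_def)
  show ?thesis
  proof
    assume "same_cycle ws0 u v"
    then obtain t where "(loop_step ws0 ^^ t) ?x \<in> {(v, Suc ?s, Up), (v, 0, Down)}"
      unfolding same_cycle_def by auto
    then have "pj ?s ((loop_step ws0 ^^ t) ?x) \<in> {(v, ?s, Up), (v, 0, Down)}" by (auto simp: pj_def)
    moreover have "pj ?s ((loop_step ws0 ^^ t) ?x) \<in> orb (loop_step ws) (u, ?s, Up)"
      using sim_fwd[OF xin, of t] px by simp
    ultimately show "same_cycle ws u v" unfolding same_cycle_def orb_def by auto
  next
    assume "same_cycle ws u v"
    then obtain t where t: "(loop_step ws ^^ t) (u, ?s, Up) \<in> {(v, ?s, Up), (v, 0, Down)}"
      unfolding same_cycle_def by auto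
    obtain t' where t': "pj ?s ((loop_step ws0 ^^ t') ?x) = (loop_step ws ^^ t) (u, ?s, Up)"
      using sim_bwd[OF xin, of t] px by auto
    define w where "w = (loop_step ws0 ^^ t') ?x"
    have win: "w \<in> XS n (Suc ?s)" unfolding w_def using B.pow_in xin by simp
    have wo: "w \<in> orb (loop_step ws0) ?x" unfolding w_def by (rule orb_pow)
    obtain v' j d where w: "w = (v',j,d)" by (cases w)
    have v': "v' \<in> V n" using win w by (simp add: XS_def)
    have "(v, Suc ?s, Up) \<in> orb (loop_step ws0) ?x \<or> (v, 0, Down) \<in> orb (loop_step ws0) ?x"
    proof (cases "pj ?s w = (v, ?s, Up)")
      case True
      then have "w = (v, ?s, Up) \<or> w = (v, Suc ?s, Up)" using w by (auto simp: pj_def split: if_splits)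
      then show ?thesis
      proof
        assume "w = (v, ?s, Up)"
        then have "loop_step ws0 w = (v, Suc ?s, Up)" by simp
        then show ?thesis using orb_step[OF wo] by metis
      qed (use wo in simp)
    next
      case False
      then have "pj ?s w = (v, 0, Down)" using t t' w_def by auto
      then have "w = (v, 0, Down) \<or> w = (v, Suc ?s, Down)" using w by (cases d) (auto simp: pj_def split: if_splits)
      then show ?thesis
      proof
        assume a: "w = (v, Suc ?s, Down)"
        then have vV: "v \<in> V n" using win by (simp add: XS_def)
        have din: "(v,0,Down) \<in> XS n (Suc ?s)" using vV by (simp add: XS_def)
        have "loop_step ws0 (v,0,Down) = w" using a by simp
        then have "w \<in> orb (loop_step ws0) (v,0,Down)" using orb_step[OF orb_self] by metis
        then have "(v,0,Down) \<in> orb (loop_step ws0) w" using B.orb_sym[of "(v,0,Down)" w] din by simp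
        then show ?thesis using orb_trans[OF wo] by blast
      qed (use wo in simp)
    qed
    then show "same_cycle ws0 u v" unfolding same_cycle_def orb_def by auto
  qed
qed

lemma cycles_ws0: "cycles n ws0 = cycles n ws"
proof -
  have *: "\<forall>u\<in>V n. {v \<in> V n. same_cycle ws0 u v} = {v \<in> V n. same_cycle ws u v}"
    using same_cycle_ws0 by auto
  show ?thesis unfolding cycles_def using * by blast
qed

end

context fperm begin

lemma orb_sub': "x \<in> X \<Longrightarrow> y \<in> orb f x \<Longrightarrow> y \<in> X"
  using orb_sub by blast

lemma dmerge:
  assumes X: "x1 \<in> X" "y1 \<in> X" "x2 \<in> X" "y2 \<in> X"
    and d1: "y1 \<notin> orb f x1" and d2: "y2 \<notin> orb f x2"
    and o1: "x2 \<notin> orb f x1 \<union> orb f y1" and o2: "y2 \<notin> orb f x1 \<union> orb f y1"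
    and w: "w \<in> X"
  shows "orb f w \<subseteq> orb ((f \<circ> sw x1 y1) \<circ> sw x2 y2) w"
proof -
  let ?H = "f \<circ> sw x1 y1"
  let ?G = "?H \<circ> sw x2 y2"
  interpret H: fperm X ?H by (rule fperm_sw[OF X(1,2)])
  have M1: "orb ?H x1 = orb f x1 \<union> orb f y1" by (rule merge[OF X(1,2) d1])
  have x2u: "orb ?H x2 = orb f x2"
    by (rule unchanged) (use o1 orb_sym[OF X(3)] orb_sym[OF X(3)] in blast)+
  have y2u: "orb ?H y2 = orb f y2"
    by (rule unchanged) (use o2 orb_sym[OF X(4)] in blast)+
  have d2H: "y2 \<notin> orb ?H x2" using x2u d2 by simp
  have M2: "orb ?G x2 = orb ?H x2 \<union> orb ?H y2" by (rule H.merge[OF X(3,4) d2H])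
  have x1G: "orb ?G x1 = orb ?H x1"
    by (rule unchanged) (use M1 o1 o2 in blast)+
  show ?thesis
  proof (cases "w \<in> orb f x1 \<union> orb f y1")
    case True
    then have "w \<in> orb ?G x1" using x1G M1 by simp
    then have "orb ?G w = orb ?G x1" using fperm.orb_eq[OF fperm_sw[OF X(1,2)] ] H.fperm_sw[OF X(3,4)] X(1)
      by (metis H.fperm_sw fperm.orb_eq)
    moreover have "orb f w \<subseteq> orb f x1 \<union> orb f y1"
      using True orb_eq[OF X(1)] orb_eq[OF X(2)] by blast
    ultimately show ?thesis using x1G M1 by simp
  next
    case False
    then have "x1 \<notin> orb f w" "y1 \<notin> orb f w" using orb_sym[OF w] by blast+
    then have wH: "orb ?H w = orb f w" by (rule unchanged)
    show ?thesis
    proof (cases "w \<in> orb ?H x2 \<union> orb ?H y2")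
      case True
      then have "w \<in> orb ?G x2" using M2 by simp
      then have "orb ?G w = orb ?G x2" by (metis H.fperm_sw[OF X(3,4)] fperm.orb_eq X(3))
      have "orb ?H w \<subseteq> orb ?H x2 \<union> orb ?H y2"
      proof (cases "w \<in> orb ?H x2")
        case True then show ?thesis using H.orb_eq[OF X(3) True] by simp
      next
        case False
        then have "w \<in> orb ?H y2" using \<open>w \<in> orb ?H x2 \<union> orb ?H y2\<close> by simp
        then show ?thesis using H.orb_eq[OF X(4)] by simp
      qed
      then show ?thesis using M2 wH \<open>orb ?G w = orb ?G x2\<close> by simp
    next
      case False
      then have "x2 \<notin> orb ?H w" "y2 \<notin> orb ?H w" using H.orb_sym[OF w] by blast+
      then have "orb ?G w = orb ?H w" by (rule unchanged)
      then show ?thesis using wH by simp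
    qed
  qed
qed

lemma orb_notin: "w \<in> X \<Longrightarrow> w \<notin> orb f z \<Longrightarrow> z' \<in> orb f z \<Longrightarrow> z' \<notin> orb f w"
  using orb_sym[of w z'] orb_trans[of z' f z w] by blast

lemma orb_cases2: "a \<in> X \<Longrightarrow> b \<in> X \<Longrightarrow> w \<in> orb f a \<union> orb f b \<Longrightarrow> orb f w = orb f a \<or> orb f w = orb f b"
  using orb_eq[of a w] orb_eq[of b w] by blast

lemma msplit:
  assumes X: "x1 \<in> X" "y1 \<in> X" and d1: "y1 \<notin> orb f x1"
    and x2: "x2 \<in> orb f x1 \<union> orb f y1" and y2: "y2 \<in> orb f x1 \<union> orb f y1" and ne: "x2 \<noteq> y2"
  shows "\<And>w. w \<in> X \<Longrightarrow> w \<notin> orb f x1 \<union> orb f y1 \<Longrightarrow> orb ((f \<circ> sw x1 y1) \<circ> sw x2 y2) w = orb f w"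
    and "orb ((f \<circ> sw x1 y1) \<circ> sw x2 y2) x2 \<union> orb ((f \<circ> sw x1 y1) \<circ> sw x2 y2) y2 = orb f x1 \<union> orb f y1"
    and "\<And>w. w \<in> orb f x1 \<union> orb f y1 \<Longrightarrow> orb ((f \<circ> sw x1 y1) \<circ> sw x2 y2) w = orb ((f \<circ> sw x1 y1) \<circ> sw x2 y2) x2
         \<or> orb ((f \<circ> sw x1 y1) \<circ> sw x2 y2) w = orb ((f \<circ> sw x1 y1) \<circ> sw x2 y2) y2"
proof -
  let ?H = "f \<circ> sw x1 y1"
  let ?G = "?H \<circ> sw x2 y2"
  interpret H: fperm X ?H by (rule fperm_sw[OF X(1,2)])
  have M1: "orb ?H x1 = orb f x1 \<union> orb f y1" by (rule merge[OF X(1,2) d1])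
  have x2X: "x2 \<in> X" "y2 \<in> X" using x2 y2 orb_sub X by blast+
  interpret G: fperm X ?G by (rule H.fperm_sw[OF x2X])
  have x2H: "orb ?H x2 = orb ?H x1" using H.orb_eq[OF X(1), of x2] x2 M1 by simp
  have y2H: "y2 \<in> orb ?H x2" using x2H M1 y2 by simp
  have S: "orb ?G x2 \<union> orb ?G y2 = orb ?H x2" by (rule H.split_both(1)[OF x2X(1) y2H ne])
  show "orb ?G x2 \<union> orb ?G y2 = orb f x1 \<union> orb f y1" using S x2H M1 by simp
  show "orb ?G w = orb f w" if "w \<in> X" "w \<notin> orb f x1 \<union> orb f y1" for w
  proof -
    have n1: "w \<notin> orb f x1" "w \<notin> orb f y1" using that by auto
    have "x1 \<notin> orb f w" using orb_notin[OF that(1) n1(1) orb_self] .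
    moreover have "y1 \<notin> orb f w" using orb_notin[OF that(1) n1(2) orb_self] .
    ultimately have wH: "orb ?H w = orb f w" by (rule unchanged)
    have "x2 \<notin> orb f w" using x2 orb_notin[OF that(1) n1(1)] orb_notin[OF that(1) n1(2)] by blast
    moreover have "y2 \<notin> orb f w" using y2 orb_notin[OF that(1) n1(1)] orb_notin[OF that(1) n1(2)] by blast
    ultimately have "orb ?G w = orb ?H w" using unchanged[where f="?H" and x=x2 and y=y2 and w=w] wH by simp
    then show ?thesis using wH by simp
  qed
  show "orb ?G w = orb ?G x2 \<or> orb ?G w = orb ?G y2" if "w \<in> orb f x1 \<union> orb f y1" for w
    by (rule G.orb_cases2[OF x2X]) (use that S x2H M1 in simp)
qed

lemma ssplit:
  assumes X: "x1 \<in> X" and y1: "y1 \<in> orb f x1" "x1 \<noteq> y1"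
    and x2: "x2 \<in> X" and y2: "y2 \<in> orb f x2" and d: "x2 \<notin> orb f x1"
  shows "\<And>w. w \<in> X \<Longrightarrow> w \<notin> orb f x1 \<union> orb f x2 \<Longrightarrow> orb ((f \<circ> sw x1 y1) \<circ> sw x2 y2) w = orb f w"
    and "\<And>w. w \<in> orb f x1 \<Longrightarrow> orb ((f \<circ> sw x1 y1) \<circ> sw x2 y2) w = orb (f \<circ> sw x1 y1) x1
         \<or> orb ((f \<circ> sw x1 y1) \<circ> sw x2 y2) w = orb (f \<circ> sw x1 y1) y1"
proof -
  let ?H = "f \<circ> sw x1 y1"
  let ?G = "?H \<circ> sw x2 y2"
  have y1X: "y1 \<in> X" using y1 orb_sub X by blast
  have y2X: "y2 \<in> X" using y2 orb_sub x2 by blast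
  interpret H: fperm X ?H by (rule fperm_sw[OF X y1X])
  have S: "orb ?H x1 \<union> orb ?H y1 = orb f x1" by (rule split_both(1)[OF X y1(1) y1(2)])
  have dx: "x1 \<notin> orb f x2" using orb_notin[OF x2 d orb_self] .
  have dy: "y1 \<notin> orb f x2" using orb_notin[OF x2 d y1(1)] .
  have x2H: "orb ?H x2 = orb f x2" by (rule unchanged[OF dx dy])
  show "orb ?G w = orb f w" if "w \<in> X" "w \<notin> orb f x1 \<union> orb f x2" for w
  proof -
    have n1: "w \<notin> orb f x1" "w \<notin> orb f x2" using that by auto
    have wH: "orb ?H w = orb f w" by (rule unchanged[OF orb_notin[OF that(1) n1(1) orb_self] orb_notin[OF that(1) n1(1) y1(1)]])
    have "orb ?G w = orb ?H w"
      using unchanged[where f="?H" and x=x2 and y=y2 and w=w] wH orb_notin[OF that(1) n1(2) orb_self] orb_notin[OF that(1) n1(2) y2]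
      by simp
    then show ?thesis using wH by simp
  qed
  show "orb ?G w = orb ?H x1 \<or> orb ?G w = orb ?H y1" if "w \<in> orb f x1" for w
  proof -
    have wo: "orb ?H w = orb ?H x1 \<or> orb ?H w = orb ?H y1"
      by (rule H.orb_cases2[OF X y1X]) (use that S in simp)
    then have sub: "orb ?H w \<subseteq> orb f x1" using S by auto
    have "x2 \<notin> orb f x1" by (rule d)
    have "y2 \<notin> orb f x1" using orb_notin[OF X _ y2] orb_notin[OF x2 d orb_self] orb_sym[OF x2]
      by (metis X orb_eq x2)
    then have "x2 \<notin> orb ?H w" "y2 \<notin> orb ?H w" using sub d by auto
    then have "orb ?G w = orb ?H w" by (rule unchanged)
    then show ?thesis using wo by simp
  qed
qed

end

lemma Vset_Un: "Vset n N (A \<union> B) = Vset n N A \<union> Vset n N B"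
  by (auto simp: Vset_def)

lemma Vset_mono: "A \<subseteq> B \<Longrightarrow> Vset n N A \<subseteq> Vset n N B"
  by (auto simp: Vset_def)

lemma ab_E: "a \<in> V n \<Longrightarrow> b \<in> V n \<Longrightarrow> a \<noteq> b \<Longrightarrow> {a,b} \<in> E n"
  unfolding E_def by blast

locale surg = wsctx +
  fixes a b :: nat and m :: mark
  assumes aV: "a \<in> V n" and bV: "b \<in> V n" and ab: "a \<noteq> b"
begin

abbreviation "ws1 \<equiv> ws @ [({a,b}, m)]"
abbreviation "XX \<equiv> XS n (Suc (length ws))"
abbreviation "z1 \<equiv> (a, length ws, Up)"
abbreviation "z2 \<equiv> (b, length ws, Up)"
abbreviation "z3 \<equiv> (a, Suc (length ws), Down)"
abbreviation "z4 \<equiv> (b, Suc (length ws), Down)"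
abbreviation "Ua \<equiv> (a, Suc (length ws), Up)"
abbreviation "Ub \<equiv> (b, Suc (length ws), Up)"
abbreviation "Da \<equiv> (a, 0::nat, Down)"
abbreviation "Db \<equiv> (b, 0::nat, Down)"

definition sig :: "nat \<times> nat \<times> dir \<Rightarrow> nat \<times> nat \<times> dir" where
  "sig = (case m of Cross \<Rightarrow> sw z1 z2 \<circ> sw z3 z4 | Bar \<Rightarrow> sw z1 z4 \<circ> sw z2 z3)"

sublocale C: lseq n ws1 by (unfold_locales) (rule valid_app[OF valws], simp add: ab_E aV bV ab)

lemma oab: "other {a,b} a = b" "other {a,b} b = a"
  using other_eq[OF ab] other_eq[of b a] ab by (auto simp: insert_commute)

lemma G_nonZ:
  assumes "x \<in> XX" "x \<noteq> z1" "x \<noteq> z2" "x \<noteq> z3" "x \<noteq> z4"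
  shows "loop_step ws1 x = loop_step ws0 x"
proof -
  let ?s = "length ws"
  obtain v j d where x: "x = (v,j,d)" by (cases x)
  have j: "j \<le> Suc ?s" using assms x by (auto simp: XS_def)
  show ?thesis
  proof (cases d)
    case Up
    show ?thesis
    proof (cases "j = Suc ?s")
      case True then show ?thesis using x Up by simp
    next
      case False
      show ?thesis
      proof (cases "j = ?s")
        case True
        then have "v \<notin> {a,b}" using assms x Up by auto
        then show ?thesis using x Up True by (simp add: nth_append)
      next
        case False
        then have "j < ?s" using j \<open>j \<noteq> Suc ?s\<close> by simp
        then show ?thesis using x Up by (simp add: nth_append)
      qed
    qed
  next
    case Down
    show ?thesis
    proof (cases "j = 0")
      case True then show ?thesis using x Down by simp
    next
      case False
      show ?thesis
      proof (cases "j = Suc ?s")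
        case True
        then have "v \<notin> {a,b}" using assms x Down by auto
        then show ?thesis using x Down True by (simp add: nth_append)
      next
        case False
        then have "j - 1 < ?s" using j \<open>j \<noteq> 0\<close> by simp
        then show ?thesis using x Down \<open>j \<noteq> 0\<close> by (simp add: nth_append)
      qed
    qed
  qed
qed

lemma sig_cross: "m = Cross \<Longrightarrow> sig z1 = z2 \<and> sig z2 = z1 \<and> sig z3 = z4 \<and> sig z4 = z3"
  unfolding sig_def using ab by (simp add: sw_def)

lemma sig_bar: "m = Bar \<Longrightarrow> sig z1 = z4 \<and> sig z4 = z1 \<and> sig z2 = z3 \<and> sig z3 = z2"
  unfolding sig_def using ab by (simp add: sw_def)

lemma F0_vals: "loop_step ws0 z1 = Ua" "loop_step ws0 z2 = Ub" "loop_step ws0 z3 = (a, length ws, Down)"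
  "loop_step ws0 z4 = (b, length ws, Down)" "loop_step ws0 Da = z3" "loop_step ws0 Db = z4"
  by (simp_all add: nth_append)

lemma ws1_nth: "ws1 ! length ws = ({a,b}, m)" by simp

lemma G_vals_cross: assumes "m = Cross"
  shows "loop_step ws1 z1 = Ub" "loop_step ws1 z2 = Ua" "loop_step ws1 z3 = (b, length ws, Down)"
    "loop_step ws1 z4 = (a, length ws, Down)"
  using assms oab by (simp_all add: nth_append)

lemma G_vals_bar: assumes "m = Bar"
  shows "loop_step ws1 z1 = (b, length ws, Down)" "loop_step ws1 z2 = (a, length ws, Down)"
    "loop_step ws1 z3 = Ub" "loop_step ws1 z4 = Ua"
  using assms oab by (simp_all add: nth_append)

lemma G_Z:
  "loop_step ws1 z1 = loop_step ws0 (sig z1)" "loop_step ws1 z2 = loop_step ws0 (sig z2)"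
  "loop_step ws1 z3 = loop_step ws0 (sig z3)" "loop_step ws1 z4 = loop_step ws0 (sig z4)"
proof -
  have "(loop_step ws1 z1 = loop_step ws0 (sig z1)) \<and> (loop_step ws1 z2 = loop_step ws0 (sig z2)) \<and>
    (loop_step ws1 z3 = loop_step ws0 (sig z3)) \<and> (loop_step ws1 z4 = loop_step ws0 (sig z4))"
  proof (cases m)
    case Cross then show ?thesis using sig_cross G_vals_cross F0_vals by simp
  next
    case Bar then show ?thesis using sig_bar G_vals_bar F0_vals by simp
  qed
  then show "loop_step ws1 z1 = loop_step ws0 (sig z1)" "loop_step ws1 z2 = loop_step ws0 (sig z2)"
  "loop_step ws1 z3 = loop_step ws0 (sig z3)" "loop_step ws1 z4 = loop_step ws0 (sig z4)" by auto
qed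

lemma sig_id: "x \<noteq> z1 \<Longrightarrow> x \<noteq> z2 \<Longrightarrow> x \<noteq> z3 \<Longrightarrow> x \<noteq> z4 \<Longrightarrow> sig x = x"
  unfolding sig_def by (cases m) (auto simp: sw_def)

lemma G_eq: assumes "x \<in> XX" shows "loop_step ws1 x = loop_step ws0 (sig x)"
proof (cases "x = z1 \<or> x = z2 \<or> x = z3 \<or> x = z4")
  case True then show ?thesis using G_Z by auto
next
  case False then show ?thesis using G_nonZ[OF assms] sig_id by auto
qed

lemma G_in: "x \<in> XX \<Longrightarrow> loop_step ws1 x \<in> XX"
  using C.F_in[of x] by simp

lemma orbG: assumes "x \<in> XX" shows "orb (loop_step ws1) x = orb (loop_step ws0 \<circ> sig) x"
  by (rule orb_cong[where X=XX]) (use G_eq G_in assms in auto)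

end

context surg begin

interpretation F0: fperm XX "loop_step ws0" using B.is_fperm by simp
interpretation G0: fperm XX "loop_step ws1" using C.is_fperm by simp

abbreviation "Oa \<equiv> orb (loop_step ws0) Ua"
abbreviation "Ra \<equiv> orb (loop_step ws0) z3"
abbreviation "Ob \<equiv> orb (loop_step ws0) Ub"
abbreviation "Rb \<equiv> orb (loop_step ws0) z4"

lemma inXX: "z1 \<in> XX" "z2 \<in> XX" "z3 \<in> XX" "z4 \<in> XX" "Ua \<in> XX" "Ub \<in> XX" "Da \<in> XX" "Db \<in> XX"
  using aV bV by (auto simp: XS_def)

lemma B_parity: "x \<in> XX \<Longrightarrow> rho x \<notin> orb (loop_step ws0) x"
  using B.parity[of x] by simp
lemma B_orb_rho: "x \<in> XX \<Longrightarrow> orb (loop_step ws0) (rho x) = rho ` orb (loop_step ws0) x"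
  using B.orb_rho[of x] by simp
lemma C_parity: "x \<in> XX \<Longrightarrow> rho x \<notin> orb (loop_step ws1) x"
  using C.parity[of x] by simp
lemma C_orb_rho: "x \<in> XX \<Longrightarrow> orb (loop_step ws1) (rho x) = rho ` orb (loop_step ws1) x"
  using C.orb_rho[of x] by simp
lemma C_Vset_rho: "x \<in> XX \<Longrightarrow> Vset n (Suc (length ws)) (orb (loop_step ws1) (rho x)) = Vset n (Suc (length ws)) (orb (loop_step ws1) x)"
  using C.Vset_rho[of x] by simp

lemma mem_orb_iff: assumes "x \<in> XX" "y \<in> XX"
  shows "y \<in> orb (loop_step ws0) x \<longleftrightarrow> orb (loop_step ws0) y = orb (loop_step ws0) x"
proof
  assume "y \<in> orb (loop_step ws0) x"
  then show "orb (loop_step ws0) y = orb (loop_step ws0) x" by (rule F0.orb_eq[OF assms(1)])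
next
  assume "orb (loop_step ws0) y = orb (loop_step ws0) x"
  then show "y \<in> orb (loop_step ws0) x" using orb_self[of y "loop_step ws0"] by simp
qed

lemma rho_img2: "rho ` rho ` A = A"
  by (simp add: image_image)

lemma rho_inj_img: "rho ` A = rho ` B \<Longrightarrow> A = B"
  by (metis rho_img2)

lemma orb_ne_rho: "x \<in> XX \<Longrightarrow> orb (loop_step ws0) (rho x) \<noteq> orb (loop_step ws0) x"
proof
  assume "x \<in> XX" "orb (loop_step ws0) (rho x) = orb (loop_step ws0) x"
  then show False using B_parity[of x] orb_self[of "rho x" "loop_step ws0"] by simp
qed

lemma Oz1: "orb (loop_step ws0) z1 = Oa"
proof -
  have "Ua \<in> orb (loop_step ws0) z1" using orb_step[OF orb_self, of "loop_step ws0" z1] F0_vals(1) by simp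
  then show ?thesis using F0.orb_eq[OF inXX(1)] by simp
qed

lemma Oz2: "orb (loop_step ws0) z2 = Ob"
proof -
  have "Ub \<in> orb (loop_step ws0) z2" using orb_step[OF orb_self, of "loop_step ws0" z2] F0_vals(2) by simp
  then show ?thesis using F0.orb_eq[OF inXX(2)] by simp
qed

lemma ODb: "orb (loop_step ws0) Db = Rb"
proof -
  have "z4 \<in> orb (loop_step ws0) Db" using orb_step[OF orb_self, of "loop_step ws0" Db] F0_vals(6) by simp
  then show ?thesis using F0.orb_eq[OF inXX(8)] by simp
qed

lemma RR_rho: "Ra = rho ` Oa" using B_orb_rho[OF inXX(5)] by simp
lemma Rb_rho: "Rb = rho ` Ob" using B_orb_rho[OF inXX(6)] by simp
lemma OR_ne: "Ra \<noteq> Oa" using orb_ne_rho[OF inXX(5)] by simp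
lemma ObRb_ne: "Rb \<noteq> Ob" using orb_ne_rho[OF inXX(6)] by simp

lemma caseb: "Ob = Oa \<Longrightarrow> Rb = Ra" using RR_rho Rb_rho by simp
lemma casec: "Rb = Oa \<Longrightarrow> Ob = Ra"
  using RR_rho Rb_rho rho_img2 by metis

lemma Ub_iff: "Ub \<in> Oa \<longleftrightarrow> Ob = Oa" using mem_orb_iff[OF inXX(5) inXX(6)] by simp
lemma Db_iff: "Db \<in> Oa \<longleftrightarrow> Rb = Oa" using mem_orb_iff[OF inXX(5) inXX(8)] ODb by simp

abbreviation "Cu u \<equiv> Vset n (Suc (length ws)) (orb (loop_step ws0) (u, Suc (length ws), Up))"
abbreviation "Su u \<equiv> Vset n (Suc (length ws)) (orb (loop_step ws1) (u, Suc (length ws), Up))"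

lemma orbG': "x \<in> XX \<Longrightarrow> orb (loop_step ws1) x = orb (loop_step ws0 \<circ> sig) x"
  by (rule orbG)

lemma sig_cross': "m = Cross \<Longrightarrow> loop_step ws0 \<circ> sig = (loop_step ws0 \<circ> sw z1 z2) \<circ> sw z3 z4"
  unfolding sig_def by (simp add: comp_assoc)
lemma sig_bar': "m = Bar \<Longrightarrow> loop_step ws0 \<circ> sig = (loop_step ws0 \<circ> sw z1 z4) \<circ> sw z2 z3"
  unfolding sig_def by (simp add: comp_assoc)

lemma UXX: "u \<in> V n \<Longrightarrow> (u, Suc (length ws), Up) \<in> XX" by (simp add: XS_def)

lemma case_alpha:
  assumes "Ob \<noteq> Oa" "Rb \<noteq> Oa" "u \<in> V n"
  shows "Cu u \<subseteq> Su u"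
proof -
  have n1: "Rb \<noteq> Ra" using assms(1) RR_rho Rb_rho rho_inj_img by metis
  have n2: "Ob \<noteq> Ra" using assms(2) RR_rho Rb_rho rho_img2 by metis
  have w: "(u, Suc (length ws), Up) \<in> XX" using UXX assms(3) .
  have "orb (loop_step ws0) (u, Suc (length ws), Up) \<subseteq> orb (loop_step ws0 \<circ> sig) (u, Suc (length ws), Up)"
  proof (cases m)
    case Cross
    have "orb (loop_step ws0) (u, Suc (length ws), Up) \<subseteq> orb ((loop_step ws0 \<circ> sw z1 z2) \<circ> sw z3 z4) (u, Suc (length ws), Up)"
    proof (rule F0.dmerge[OF inXX(1,2,3,4)])
      show "z2 \<notin> orb (loop_step ws0) z1" using mem_orb_iff[OF inXX(1,2)] Oz1 Oz2 assms by simp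
      show "z4 \<notin> orb (loop_step ws0) z3" using mem_orb_iff[OF inXX(3,4)] n1 by simp
      show "z3 \<notin> orb (loop_step ws0) z1 \<union> orb (loop_step ws0) z2"
        using mem_orb_iff[OF inXX(1,3)] mem_orb_iff[OF inXX(2,3)] Oz1 Oz2 OR_ne n2 by auto
      show "z4 \<notin> orb (loop_step ws0) z1 \<union> orb (loop_step ws0) z2"
        using mem_orb_iff[OF inXX(1,4)] mem_orb_iff[OF inXX(2,4)] Oz1 Oz2 assms ObRb_ne by auto
    qed (rule w)
    then show ?thesis using sig_cross'[OF Cross] by simp
  next
    case Bar
    have "orb (loop_step ws0) (u, Suc (length ws), Up) \<subseteq> orb ((loop_step ws0 \<circ> sw z1 z4) \<circ> sw z2 z3) (u, Suc (length ws), Up)"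
    proof (rule F0.dmerge[OF inXX(1,4,2,3)])
      show "z4 \<notin> orb (loop_step ws0) z1" using mem_orb_iff[OF inXX(1,4)] Oz1 assms by simp
      show "z3 \<notin> orb (loop_step ws0) z2" using mem_orb_iff[OF inXX(2,3)] Oz2 n2 by simp
      show "z2 \<notin> orb (loop_step ws0) z1 \<union> orb (loop_step ws0) z4"
        using mem_orb_iff[OF inXX(1,2)] mem_orb_iff[OF inXX(4,2)] Oz1 Oz2 assms ObRb_ne by auto
      show "z3 \<notin> orb (loop_step ws0) z1 \<union> orb (loop_step ws0) z4"
        using mem_orb_iff[OF inXX(1,3)] mem_orb_iff[OF inXX(4,3)] Oz1 OR_ne n1 by auto
    qed (rule w)
    then show ?thesis using sig_bar'[OF Bar] by simp
  qed
  then show ?thesis using orbG'[OF w] Vset_mono by metis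
qed

lemma restruct:
  assumes sg: "loop_step ws0 \<circ> sig = (loop_step ws0 \<circ> sw x1 y1) \<circ> sw x2 y2"
    and x1: "x1 \<in> Oa" and y1: "y1 \<in> Ra" and x2: "x2 \<in> Oa \<union> Ra" and y2: "y2 \<in> Oa \<union> Ra" and ne: "x2 \<noteq> y2"
    and u: "u \<in> V n"
  shows "Cu u \<subseteq> Su u"
proof -
  have OX: "Oa \<subseteq> XX" "Ra \<subseteq> XX" using F0.orb_sub inXX by auto
  have x1X: "x1 \<in> XX" and y1X: "y1 \<in> XX" using x1 y1 OX by auto
  have ox1: "orb (loop_step ws0) x1 = Oa" using F0.orb_eq[OF inXX(5) x1] .
  have oy1: "orb (loop_step ws0) y1 = Ra" using F0.orb_eq[OF inXX(3) y1] .
  have d1: "y1 \<notin> orb (loop_step ws0) x1" using mem_orb_iff[OF x1X y1X] ox1 oy1 OR_ne by simp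
  let ?G = "(loop_step ws0 \<circ> sw x1 y1) \<circ> sw x2 y2"
  have M: "\<And>w. w \<in> XX \<Longrightarrow> w \<notin> Oa \<union> Ra \<Longrightarrow> orb ?G w = orb (loop_step ws0) w"
          "orb ?G x2 \<union> orb ?G y2 = Oa \<union> Ra"
          "\<And>w. w \<in> Oa \<union> Ra \<Longrightarrow> orb ?G w = orb ?G x2 \<or> orb ?G w = orb ?G y2"
    using F0.msplit[OF x1X y1X d1, of x2 y2] x2 y2 ne ox1 oy1 by simp_all
  have x2X: "x2 \<in> XX" "y2 \<in> XX" using x2 y2 OX by auto
  have oG: "\<And>w. w \<in> XX \<Longrightarrow> orb (loop_step ws1) w = orb ?G w" using orbG' sg by simp
  have rhoOR: "rho ` (Oa \<union> Ra) = Oa \<union> Ra"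
    unfolding image_Un RR_rho rho_img2 by blast
  have rx2: "rho x2 \<in> Oa \<union> Ra" using x2 rhoOR by blast
  have "orb ?G (rho x2) \<noteq> orb ?G x2"
  proof
    assume "orb ?G (rho x2) = orb ?G x2"
    then have "rho x2 \<in> orb (loop_step ws1) x2" using orb_self[where x="rho x2" and f="?G"] oG[OF x2X(1)] oG[OF rho_XS[OF x2X(1)]] by simp
    then show False using C_parity[OF x2X(1)] by simp
  qed
  then have "orb ?G (rho x2) = orb ?G y2" using M(3)[OF rx2] by blast
  then have VQ: "Vset n (Suc (length ws)) (orb ?G y2) = Vset n (Suc (length ws)) (orb ?G x2)"
    using C_Vset_rho[OF x2X(1)] oG[OF x2X(1)] oG[OF rho_XS[OF x2X(1)]] by simp
  have w: "(u, Suc (length ws), Up) \<in> XX" using UXX u .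
  show ?thesis
  proof (cases "(u, Suc (length ws), Up) \<in> Oa \<union> Ra")
    case False
    then show ?thesis using M(1)[OF w False] oG[OF w] by simp
  next
    case True
    have "orb (loop_step ws0) (u, Suc (length ws), Up) \<subseteq> Oa \<union> Ra"
      using F0.orb_cases2[OF inXX(5) inXX(3) True] by auto
    then have "Cu u \<subseteq> Vset n (Suc (length ws)) (Oa \<union> Ra)" by (rule Vset_mono)
    also have "\<dots> = Vset n (Suc (length ws)) (orb ?G x2) \<union> Vset n (Suc (length ws)) (orb ?G y2)"
      by (simp only: M(2)[symmetric] Vset_Un)
    also have "\<dots> = Vset n (Suc (length ws)) (orb ?G x2)" using VQ by simp
    also have "\<dots> = Su u"
    proof -
      have e: "Su u = Vset n (Suc (length ws)) (orb ?G (u, Suc (length ws), Up))" using oG[OF w] by simp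
      from M(3)[OF True] show ?thesis
      proof
        assume "orb ?G (u, Suc (length ws), Up) = orb ?G x2" then show ?thesis using e by simp
      next
        assume "orb ?G (u, Suc (length ws), Up) = orb ?G y2" then show ?thesis using e VQ by simp
      qed
    qed
    finally show ?thesis .
  qed
qed

end

context wsctx begin

interpretation F0: fperm "XS n (Suc (length ws))" "loop_step ws0" using B.is_fperm by simp

definition tbf :: "nat \<Rightarrow> nat \<Rightarrow> nat" where
  "tbf a b = (LEAST t. (loop_step ws0 ^^ t) (a, Suc (length ws), Up) \<in> {(b, Suc (length ws), Up), (b, 0, Down)})"

definition posf :: "nat \<Rightarrow> nat \<Rightarrow> nat" where
  "posf a b = card (Vset n (Suc (length ws)) ((\<lambda>i. (loop_step ws0 ^^ i) (a, Suc (length ws), Up)) ` {..<tbf a b}))"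

definition ellf :: "nat \<Rightarrow> nat" where
  "ellf a = card (Vset n (Suc (length ws)) (orb (loop_step ws0) (a, Suc (length ws), Up)))"

lemma B_node_excl: "x \<in> XS n (Suc (length ws)) \<Longrightarrow>
   \<not> ((v, Suc (length ws), Up) \<in> orb (loop_step ws0) x \<and> (v, 0, Down) \<in> orb (loop_step ws0) x)"
  using B.node_excl[of x v] by simp

lemma Vset_fin: "finite (Vset n N A)"
  by (rule finite_subset[of _ "V n"]) (auto simp: Vset_def V_def)

lemma Vset_diff:
  assumes x: "x \<in> XS n (Suc (length ws))" and A: "A \<subseteq> orb (loop_step ws0) x"
  shows "Vset n (Suc (length ws)) (orb (loop_step ws0) x - A) = Vset n (Suc (length ws)) (orb (loop_step ws0) x) - Vset n (Suc (length ws)) A"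
proof
  show "Vset n (Suc (length ws)) (orb (loop_step ws0) x - A) \<subseteq> Vset n (Suc (length ws)) (orb (loop_step ws0) x) - Vset n (Suc (length ws)) A"
  proof
    fix v assume v: "v \<in> Vset n (Suc (length ws)) (orb (loop_step ws0) x - A)"
    have ne: "\<not> ((v, Suc (length ws), Up) \<in> orb (loop_step ws0) x \<and> (v, 0, Down) \<in> orb (loop_step ws0) x)"
      by (rule B_node_excl[OF x])
    show "v \<in> Vset n (Suc (length ws)) (orb (loop_step ws0) x) - Vset n (Suc (length ws)) A"
      using v ne A unfolding Vset_def by blast
  qed
qed (auto simp: Vset_def)

lemma tb_props:
  assumes a: "a \<in> V n" and b: "b \<in> Vset n (Suc (length ws)) (orb (loop_step ws0) (a, Suc (length ws), Up))" and ab: "a \<noteq> b"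
  shows "(loop_step ws0 ^^ tbf a b) (a, Suc (length ws), Up) \<in> {(b, Suc (length ws), Up), (b, 0, Down)}"
    "\<And>i. i < tbf a b \<Longrightarrow> (loop_step ws0 ^^ i) (a, Suc (length ws), Up) \<notin> {(b, Suc (length ws), Up), (b, 0, Down)}"
    "0 < tbf a b"
proof -
  let ?P = "\<lambda>t. (loop_step ws0 ^^ t) (a, Suc (length ws), Up) \<in> {(b, Suc (length ws), Up), (b, 0, Down)}"
  have "\<exists>t. ?P t" using b unfolding Vset_def orb_def by auto
  then show P: "?P (tbf a b)" unfolding tbf_def by (rule LeastI_ex)
  show "\<And>i. i < tbf a b \<Longrightarrow> \<not> ?P i" unfolding tbf_def by (rule not_less_Least)
  show "0 < tbf a b"
  proof (rule ccontr)
    assume "\<not> 0 < tbf a b"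
    then have "tbf a b = 0" by simp
    then show False using P ab by simp
  qed
qed

lemma posf_bounds:
  assumes a: "a \<in> V n" and b: "b \<in> Vset n (Suc (length ws)) (orb (loop_step ws0) (a, Suc (length ws), Up))" and ab: "a \<noteq> b"
  shows "1 \<le> posf a b" "posf a b < ellf a"
    "b \<notin> Vset n (Suc (length ws)) ((\<lambda>i. (loop_step ws0 ^^ i) (a, Suc (length ws), Up)) ` {..<tbf a b})"
proof -
  let ?I = "Vset n (Suc (length ws)) ((\<lambda>i. (loop_step ws0 ^^ i) (a, Suc (length ws), Up)) ` {..<tbf a b})"
  let ?O = "Vset n (Suc (length ws)) (orb (loop_step ws0) (a, Suc (length ws), Up))"
  have t0: "0 < tbf a b" by (rule tb_props(3)[OF a b ab])
  have "a \<in> ?I" using a t0 unfolding Vset_def by (auto intro!: image_eqI[of _ _ 0])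
  then show "1 \<le> posf a b" unfolding posf_def using Vset_fin by (metis One_nat_def Suc_leI card_gt_0_iff empty_iff)
  show bn: "b \<notin> ?I"
  proof
    assume "b \<in> ?I"
    then obtain i where "i < tbf a b" "(loop_step ws0 ^^ i) (a, Suc (length ws), Up) \<in> {(b, Suc (length ws), Up), (b, 0, Down)}"
      unfolding Vset_def by auto
    then show False using tb_props(2)[OF a b ab] by blast
  qed
  have "?I \<subseteq> ?O" unfolding Vset_def orb_def by auto
  then have "?I \<subseteq> ?O - {b}" using bn by auto
  moreover have "?O - {b} \<subset> ?O" using b by auto
  ultimately have "?I \<subset> ?O" by blast
  then show "posf a b < ellf a" unfolding posf_def ellf_def using Vset_fin psubset_card_mono by blast
qed

lemma posf_inj:
  assumes a: "a \<in> V n"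
  shows "inj_on (posf a) (Vset n (Suc (length ws)) (orb (loop_step ws0) (a, Suc (length ws), Up)) - {a})"
proof -
  let ?O = "Vset n (Suc (length ws)) (orb (loop_step ws0) (a, Suc (length ws), Up))"
  let ?I = "\<lambda>b. Vset n (Suc (length ws)) ((\<lambda>i. (loop_step ws0 ^^ i) (a, Suc (length ws), Up)) ` {..<tbf a b})"
  have lt: "posf a b < posf a b'" if "b \<in> ?O - {a}" "b' \<in> ?O - {a}" "tbf a b < tbf a b'" for b b'
  proof -
    have "?I b \<subseteq> ?I b'" using that(3) unfolding Vset_def by auto
    moreover have "b \<in> ?I b'"
    proof -
      have q: "(loop_step ws0 ^^ tbf a b) (a, Suc (length ws), Up) \<in> {(b, Suc (length ws), Up), (b, 0, Down)}"
        using tb_props(1)[of a b] that a by auto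
      have im: "(loop_step ws0 ^^ tbf a b) (a, Suc (length ws), Up) \<in> (\<lambda>i. (loop_step ws0 ^^ i) (a, Suc (length ws), Up)) ` {..<tbf a b'}"
        using that(3) by simp
      have "b \<in> V n" using that(1) unfolding Vset_def by simp
      then show ?thesis using q im unfolding Vset_def by auto
    qed
    moreover have "b \<notin> ?I b" using posf_bounds(3)[of a b] that a by auto
    ultimately have "?I b \<subset> ?I b'" by blast
    then show ?thesis unfolding posf_def using Vset_fin psubset_card_mono by blast
  qed
  show ?thesis
  proof (rule inj_onI)
    fix b b' assume bb: "b \<in> ?O - {a}" "b' \<in> ?O - {a}" "posf a b = posf a b'"
    show "b = b'"
    proof (cases "tbf a b" "tbf a b'" rule: linorder_cases)
      case less then show ?thesis using lt[OF bb(1,2)] bb(3) by simp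
    next
      case greater then show ?thesis using lt[OF bb(2,1)] bb(3) by simp
    next
      case equal
      have "(loop_step ws0 ^^ tbf a b) (a, Suc (length ws), Up) \<in> {(b, Suc (length ws), Up), (b, 0, Down)}"
        using tb_props(1)[of a b] bb a by auto
      moreover have "(loop_step ws0 ^^ tbf a b) (a, Suc (length ws), Up) \<in> {(b', Suc (length ws), Up), (b', 0, Down)}"
        using tb_props(1)[of a b'] bb a equal by auto
      ultimately show ?thesis by auto
    qed
  qed
qed

end

context surg begin

interpretation F0: fperm XX "loop_step ws0" using B.is_fperm by simp

abbreviation "NN \<equiv> Suc (length ws)"

lemma z1_pow: "(loop_step ws0 ^^ Suc j) z1 = (loop_step ws0 ^^ j) Ua"
  by (simp only: funpow_Suc_right o_apply F0_vals(1))

lemma img_shift: "(\<lambda>j. (loop_step ws0 ^^ j) z1) ` {1..k} = (\<lambda>i. (loop_step ws0 ^^ i) Ua) ` {..<k}"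
proof
  show "(\<lambda>j. (loop_step ws0 ^^ j) z1) ` {1..k} \<subseteq> (\<lambda>i. (loop_step ws0 ^^ i) Ua) ` {..<k}"
  proof
    fix y assume "y \<in> (\<lambda>j. (loop_step ws0 ^^ j) z1) ` {1..k}"
    then obtain j where j: "j \<in> {1..k}" "y = (loop_step ws0 ^^ j) z1" by auto
    then obtain i where i: "j = Suc i" by (cases j) auto
    then show "y \<in> (\<lambda>i. (loop_step ws0 ^^ i) Ua) ` {..<k}" using j z1_pow[of i] by auto
  qed
  show "(\<lambda>i. (loop_step ws0 ^^ i) Ua) ` {..<k} \<subseteq> (\<lambda>j. (loop_step ws0 ^^ j) z1) ` {1..k}"
  proof
    fix y assume "y \<in> (\<lambda>i. (loop_step ws0 ^^ i) Ua) ` {..<k}"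
    then obtain i where i: "i < k" "y = (loop_step ws0 ^^ i) Ua" by auto
    then show "y \<in> (\<lambda>j. (loop_step ws0 ^^ j) z1) ` {1..k}"
      using z1_pow[of i] by (intro image_eqI[of _ _ "Suc i"]) auto
  qed
qed

lemma z1_Oa: "z1 \<in> Oa" using Oz1 orb_self[of z1 "loop_step ws0"] by simp

lemma splitcase:
  assumes sg: "loop_step ws0 \<circ> sig = (loop_step ws0 \<circ> sw z1 y1) \<circ> sw x2 y2"
    and y1: "y1 \<in> Oa" "y1 \<noteq> z1" and x2: "x2 \<in> Ra" and y2: "y2 \<in> Ra"
    and u: "u \<in> V n" and nsub: "\<not> Cu u \<subseteq> Su u"
  shows "Su u = Vset n NN (orb (loop_step ws0 \<circ> sw z1 y1) z1) \<or> Su u = Vset n NN (orb (loop_step ws0 \<circ> sw z1 y1) y1)"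
proof -
  have y1o: "y1 \<in> orb (loop_step ws0) z1" using y1 Oz1 by simp
  have x2X: "x2 \<in> XX" using x2 F0.orb_sub inXX(3) by blast
  have ox2: "orb (loop_step ws0) x2 = Ra" using F0.orb_eq[OF inXX(3) x2] .
  have y2o: "y2 \<in> orb (loop_step ws0) x2" using ox2 y2 by simp
  have d: "x2 \<notin> orb (loop_step ws0) z1"
  proof
    assume "x2 \<in> orb (loop_step ws0) z1"
    then have "orb (loop_step ws0) x2 = Oa" using F0.orb_eq[OF inXX(1)] Oz1 by simp
    then show False using ox2 OR_ne by simp
  qed
  let ?H = "loop_step ws0 \<circ> sw z1 y1"
  let ?G = "?H \<circ> sw x2 y2"
  have SS1: "\<And>w. w \<in> XX \<Longrightarrow> w \<notin> Oa \<union> Ra \<Longrightarrow> orb ?G w = orb (loop_step ws0) w"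
    using F0.ssplit(1)[OF inXX(1) y1o y1(2)[symmetric] x2X y2o d] Oz1 ox2 by simp
  have SS2: "\<And>w. w \<in> Oa \<Longrightarrow> orb ?G w = orb ?H z1 \<or> orb ?G w = orb ?H y1"
    using F0.ssplit(2)[OF inXX(1) y1o y1(2)[symmetric] x2X y2o d] Oz1 by simp
  have oG: "\<And>w. w \<in> XX \<Longrightarrow> orb (loop_step ws1) w = orb ?G w" using orbG' sg by simp
  let ?w = "(u, NN, Up)"
  have w: "?w \<in> XX" using UXX u .
  show ?thesis
  proof (cases "?w \<in> Oa \<union> Ra")
    case False
    then have "Su u = Cu u" using SS1[OF w False] oG[OF w] by simp
    then show ?thesis using nsub by simp
  next
    case True
    obtain w0 where w0: "w0 \<in> Oa" "Su u = Vset n NN (orb (loop_step ws1) w0)"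
    proof (cases "?w \<in> Oa")
      case True then show ?thesis using that by blast
    next
      case False
      then have "?w \<in> rho ` Oa" using \<open>?w \<in> Oa \<union> Ra\<close> RR_rho by simp
      then obtain w0 where w0: "w0 \<in> Oa" "?w = rho w0" by blast
      have "w0 \<in> XX" using w0(1) F0.orb_sub inXX(5) by blast
      then have "Su u = Vset n NN (orb (loop_step ws1) w0)" using C_Vset_rho w0(2) by simp
      then show ?thesis using that w0(1) by blast
    qed
    have "w0 \<in> XX" using w0(1) F0.orb_sub inXX(5) by blast
    then have "orb (loop_step ws1) w0 = orb ?G w0" by (rule oG)
    then show ?thesis using SS2[OF w0(1)] w0(2) by auto
  qed
qed

lemma card_Vdiff:
  assumes "A \<subseteq> Oa"
  shows "card (Vset n NN (Oa - A)) = ellf a - card (Vset n NN A)"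
proof -
  have "Vset n NN (Oa - A) = Vset n NN Oa - Vset n NN A" by (rule Vset_diff[OF inXX(5) assms])
  moreover have "Vset n NN A \<subseteq> Vset n NN Oa" using assms by (rule Vset_mono)
  ultimately show ?thesis unfolding ellf_def using card_Diff_subset[OF Vset_fin] by simp
qed

lemma split_cross:
  assumes m: "m = Cross" and ob: "Ob = Oa" and u: "u \<in> V n" and nsub: "\<not> Cu u \<subseteq> Su u"
  shows "card (Su u) = posf a b \<or> card (Su u) = ellf a - posf a b"
proof -
  have z2: "z2 \<in> Oa" using Oz2 ob orb_self[of z2 "loop_step ws0"] by simp
  have z3: "z3 \<in> Ra" using orb_self[of z3 "loop_step ws0"] .
  have z4: "z4 \<in> Ra" using caseb[OF ob] orb_self[of z4 "loop_step ws0"] by simp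
  have SC: "Su u = Vset n NN (orb (loop_step ws0 \<circ> sw z1 z2) z1) \<or> Su u = Vset n NN (orb (loop_step ws0 \<circ> sw z1 z2) z2)"
    by (rule splitcase[OF sig_cross'[OF m] z2 _ z3 z4 u nsub]) (use ab in simp)
  have bO: "b \<in> Vset n NN Oa" using Ub_iff ob bV by (simp add: Vset_def)
  define t where "t = tbf a b"
  have tp: "(loop_step ws0 ^^ t) Ua \<in> {Ub, Db}" "\<And>i. i < t \<Longrightarrow> (loop_step ws0 ^^ i) Ua \<notin> {Ub, Db}" "0 < t"
    using tb_props[OF aV bO ab] unfolding t_def by auto
  have nDb: "Db \<notin> Oa" using B_node_excl[OF inXX(5), of b] Ub_iff ob by auto
  have tU: "(loop_step ws0 ^^ t) Ua = Ub" using tp(1) nDb orb_pow[where f="loop_step ws0" and i=t and x=Ua] by auto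
  obtain t' where t': "t = Suc t'" using tp(3) by (cases t) auto
  have q: "(loop_step ws0 ^^ t') Ua = z2"
  proof (rule F0.injf[THEN inj_onD])
    show "loop_step ws0 ((loop_step ws0 ^^ t') Ua) = loop_step ws0 z2" using tU t' F0_vals(2) by simp
  qed (use F0.pow_in inXX in auto)
  have d1: "(loop_step ws0 ^^ t) z1 = z2" using q t' z1_pow by simp
  have d2: "\<forall>j<t. (loop_step ws0 ^^ j) z1 \<noteq> z2"
  proof (intro allI impI)
    fix j assume j: "j < t"
    show "(loop_step ws0 ^^ j) z1 \<noteq> z2"
    proof (cases j)
      case 0 then show ?thesis using ab by simp
    next
      case (Suc j')
      show ?thesis
      proof
        assume "(loop_step ws0 ^^ j) z1 = z2"
        then have "(loop_step ws0 ^^ j') Ua = z2" using Suc z1_pow by simp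
        then have "(loop_step ws0 ^^ Suc j') Ua = Ub" using F0_vals(2) by simp
        then show False using tp(2)[of "Suc j'"] j Suc by simp
      qed
    qed
  qed
  have z12: "z1 \<noteq> z2" using ab by simp
  have A2: "orb (loop_step ws0 \<circ> sw z1 z2) z2 = (\<lambda>i. (loop_step ws0 ^^ i) Ua) ` {..<t}"
    using F0.split_arc[OF inXX(1) z12 d1 d2] img_shift by simp
  have A1: "orb (loop_step ws0 \<circ> sw z1 z2) z1 = Oa - orb (loop_step ws0 \<circ> sw z1 z2) z2"
    using F0.split_arc2[OF inXX(1) z12 d1 d2] Oz1 by simp
  have c2: "card (Vset n NN (orb (loop_step ws0 \<circ> sw z1 z2) z2)) = posf a b"
    unfolding A2 posf_def t_def ..
  have sub: "orb (loop_step ws0 \<circ> sw z1 z2) z2 \<subseteq> Oa" unfolding A2 by (auto simp: orb_def)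
  have c1: "card (Vset n NN (orb (loop_step ws0 \<circ> sw z1 z2) z1)) = ellf a - posf a b"
    unfolding A1 using card_Vdiff[OF sub] c2 by simp
  show ?thesis using SC c1 c2 by auto
qed

lemma split_bar:
  assumes m: "m = Bar" and rb: "Rb = Oa" and u: "u \<in> V n" and nsub: "\<not> Cu u \<subseteq> Su u"
  shows "card (Su u) = posf a b + 1 \<or> card (Su u) = ellf a - (posf a b + 1)"
proof -
  have z4: "z4 \<in> Oa" using rb orb_self[of z4 "loop_step ws0"] by simp
  have z3: "z3 \<in> Ra" using orb_self[of z3 "loop_step ws0"] .
  have z2: "z2 \<in> Ra" using casec[OF rb] Oz2 orb_self[of z2 "loop_step ws0"] by simp
  have SC: "Su u = Vset n NN (orb (loop_step ws0 \<circ> sw z1 z4) z1) \<or> Su u = Vset n NN (orb (loop_step ws0 \<circ> sw z1 z4) z4)"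
    by (rule splitcase[OF sig_bar'[OF m] z4 _ z2 z3 u nsub]) simp
  have bO: "b \<in> Vset n NN Oa" using Db_iff rb bV by (simp add: Vset_def)
  define t where "t = tbf a b"
  have tp: "(loop_step ws0 ^^ t) Ua \<in> {Ub, Db}" "\<And>i. i < t \<Longrightarrow> (loop_step ws0 ^^ i) Ua \<notin> {Ub, Db}" "0 < t"
    using tb_props[OF aV bO ab] unfolding t_def by auto
  have nUb: "Ub \<notin> Oa" using B_node_excl[OF inXX(5), of b] Db_iff rb by auto
  have tD: "(loop_step ws0 ^^ t) Ua = Db" using tp(1) nUb orb_pow[where f="loop_step ws0" and i=t and x=Ua] by auto
  have d1: "(loop_step ws0 ^^ Suc (Suc t)) z1 = z4" using z1_pow[of "Suc t"] tD F0_vals(6) by simp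
  have d2: "\<forall>j<Suc (Suc t). (loop_step ws0 ^^ j) z1 \<noteq> z4"
  proof (intro allI impI)
    fix j assume j: "j < Suc (Suc t)"
    show "(loop_step ws0 ^^ j) z1 \<noteq> z4"
    proof (cases j)
      case 0 then show ?thesis by simp
    next
      case (Suc j')
      show ?thesis
      proof (cases j')
        case 0 then show ?thesis using Suc z1_pow[of 0] by simp
      next
        case (Suc j'')
        show ?thesis
        proof
          assume "(loop_step ws0 ^^ j) z1 = z4"
          then have e: "loop_step ws0 ((loop_step ws0 ^^ j'') Ua) = loop_step ws0 Db"
            using \<open>j = Suc j'\<close> Suc z1_pow[of j'] F0_vals(6) by simp
          have "(loop_step ws0 ^^ j'') Ua = Db"
            by (rule F0.injf[THEN inj_onD, OF e]) (use F0.pow_in inXX in auto)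
          then show False using tp(2)[of j''] j \<open>j = Suc j'\<close> Suc by simp
        qed
      qed
    qed
  qed
  have z14: "z1 \<noteq> z4" by simp
  have A2: "orb (loop_step ws0 \<circ> sw z1 z4) z4 = (\<lambda>i. (loop_step ws0 ^^ i) Ua) ` {..<Suc (Suc t)}"
    using F0.split_arc[OF inXX(1) z14 d1 d2] img_shift by simp
  also have "\<dots> = (\<lambda>i. (loop_step ws0 ^^ i) Ua) ` {..<t} \<union> {Db, z4}"
    using tD F0_vals(6) by (auto simp: lessThan_Suc)
  finally have A2': "orb (loop_step ws0 \<circ> sw z1 z4) z4 = (\<lambda>i. (loop_step ws0 ^^ i) Ua) ` {..<t} \<union> {Db, z4}" .
  have A1: "orb (loop_step ws0 \<circ> sw z1 z4) z1 = Oa - orb (loop_step ws0 \<circ> sw z1 z4) z4"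
    using F0.split_arc2[OF inXX(1) z14 d1 d2] Oz1 by simp
  have Vb: "Vset n NN {Db, z4} = {b}" using bV by (auto simp: Vset_def)
  have bn: "b \<notin> Vset n NN ((\<lambda>i. (loop_step ws0 ^^ i) Ua) ` {..<t})"
    using posf_bounds(3)[OF aV bO ab] unfolding t_def .
  have c2: "card (Vset n NN (orb (loop_step ws0 \<circ> sw z1 z4) z4)) = posf a b + 1"
    unfolding A2' Vset_Un Vb using bn Vset_fin unfolding posf_def t_def by simp
  have sub: "orb (loop_step ws0 \<circ> sw z1 z4) z4 \<subseteq> Oa"
    unfolding A2' using z4 Db_iff rb by (auto simp: orb_def)
  have c1: "card (Vset n NN (orb (loop_step ws0 \<circ> sw z1 z4) z1)) = ellf a - (posf a b + 1)"
    unfolding A1 using card_Vdiff[OF sub] c2 by simp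
  show ?thesis using SC c1 c2 by auto
qed

end

definition Pset :: "mark \<Rightarrow> nat \<Rightarrow> nat \<Rightarrow> nat set" where
  "Pset m ell k = (case m of
     Cross \<Rightarrow> {p. 1 \<le> p \<and> p < ell \<and> (p \<le> k \<or> ell - p \<le> k)}
   | Bar \<Rightarrow> {p. 1 \<le> p \<and> p < ell \<and> (p + 1 \<le> k \<or> (1 \<le> ell - (p + 1) \<and> ell - (p + 1) \<le> k))})"

lemma card_Pset: "card (Pset m ell k) \<le> 2 * k"
proof (cases m)
  case Cross
  have "Pset m ell k \<subseteq> {1..k} \<union> {ell - k..<ell}" unfolding Pset_def Cross by auto
  then have "card (Pset m ell k) \<le> card ({1..k} \<union> {ell - k..<ell})" by (intro card_mono) auto
  also have "\<dots> \<le> card {1..k} + card {ell - k..<ell}" by (rule card_Un_le)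
  also have "\<dots> \<le> 2 * k" by simp
  finally show ?thesis .
next
  case Bar
  have "Pset m ell k \<subseteq> {1..<k} \<union> {ell - 1 - k..<ell - 1}" unfolding Pset_def Bar by auto
  then have "card (Pset m ell k) \<le> card ({1..<k} \<union> {ell - 1 - k..<ell - 1})" by (intro card_mono) auto
  also have "\<dots> \<le> card {1..<k} + card {ell - 1 - k..<ell - 1}" by (rule card_Un_le)
  also have "\<dots> \<le> 2 * k" by simp
  finally show ?thesis .
qed

context surg begin

lemma cyc_ws: "cycles n ws = {Cu u | u. u \<in> V n}"
  using cycles_ws0 B.cycles_eq by simp

lemma cyc_ws1: "cycles n ws1 = {Su u | u. u \<in> V n}"
  using C.cycles_eq by simp

lemma splits_imp:
  assumes "splits_small n ws ({a,b},m) k"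
  shows "\<exists>u\<in>V n. Su u \<subset> Cu u \<and> card (Su u) \<le> k"
proof -
  obtain CC C1 C2 where C: "CC \<in> cycles n ws" "C1 \<union> C2 = CC" "C1 \<inter> C2 = {}" "C1 \<noteq> {}" "C2 \<noteq> {}"
    "cycles n ws1 = (cycles n ws - {CC}) \<union> {C1, C2}" "card C1 \<le> k \<or> card C2 \<le> k"
    using assms unfolding splits_small_def by blast
  obtain T where T: "T \<in> cycles n ws1" "T \<subset> CC" "card T \<le> k"
  proof (cases "card C1 \<le> k")
    case True
    have "C1 \<subset> CC" using C by blast
    then show ?thesis using that C True by blast
  next
    case False
    have "C2 \<subset> CC" using C by blast
    then show ?thesis using that C False by blast
  qed
  obtain u where u: "u \<in> V n" "T = Su u" using T(1) cyc_ws1 by auto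
  obtain u' where u': "u' \<in> V n" "CC = Cu u'" using C(1) cyc_ws by auto
  have "u \<in> Su u" using C.cyc_self[OF u(1)] by simp
  then have "u \<in> Cu u'" using T(2) u u' by blast
  then have "Cu u = Cu u'" using B.cyc_eq[OF u'(1), of u] by simp
  then have "Su u \<subset> Cu u" using T(2) u(2) u'(2) by simp
  then show ?thesis using u T(3) by blast
qed

lemma bad_final:
  assumes "splits_small n ws ({a,b},m) k"
  shows "b \<in> Vset n NN Oa \<and> posf a b \<in> Pset m (ellf a) k"
proof -
  obtain u where u: "u \<in> V n" "Su u \<subset> Cu u" "card (Su u) \<le> k" using splits_imp[OF assms] by blast
  have nsub: "\<not> Cu u \<subseteq> Su u" using u(2) by blast
  have uS: "u \<in> Su u" using C.cyc_self[OF u(1)] by simp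
  have cS: "1 \<le> card (Su u)" using uS Vset_fin by (metis One_nat_def Suc_leI card_gt_0_iff empty_iff)
  have main: "b \<in> Vset n NN Oa \<and> (case m of Cross \<Rightarrow> (posf a b \<le> k \<or> ellf a - posf a b \<le> k)
     | Bar \<Rightarrow> (posf a b + 1 \<le> k \<or> (1 \<le> ellf a - (posf a b + 1) \<and> ellf a - (posf a b + 1) \<le> k)))"
  proof (cases "Ob = Oa")
    case True
    have bO: "b \<in> Vset n NN Oa" using Ub_iff True bV by (simp add: Vset_def)
    show ?thesis
    proof (cases m)
      case Cross
      then show ?thesis using split_cross[OF Cross True u(1) nsub] u(3) bO by auto
    next
      case Bar
      have z4: "z4 \<in> Ra" using caseb[OF True] orb_self[of z4 "loop_step ws0"] by simp
      have z2: "z2 \<in> Oa \<union> Ra" using True Oz2 orb_self[of z2 "loop_step ws0"] by simp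
      have "Cu u \<subseteq> Su u"
        by (rule restruct[OF sig_bar'[OF Bar] z1_Oa z4 z2 _ _ u(1)]) (use orb_self[of z3 "loop_step ws0"] ab in auto)
      then show ?thesis using nsub by simp
    qed
  next
    case nob: False
    show ?thesis
    proof (cases "Rb = Oa")
      case True
      have bO: "b \<in> Vset n NN Oa" using Db_iff True bV by (simp add: Vset_def)
      show ?thesis
      proof (cases m)
        case Bar
        then show ?thesis using split_bar[OF Bar True u(1) nsub] u(3) bO cS by auto
      next
        case Cross
        have z2: "z2 \<in> Ra" using casec[OF True] Oz2 orb_self[of z2 "loop_step ws0"] by simp
        have z4: "z4 \<in> Oa \<union> Ra" using True orb_self[of z4 "loop_step ws0"] by simp
        have "Cu u \<subseteq> Su u"
          by (rule restruct[OF sig_cross'[OF Cross] z1_Oa z2 _ z4 _ u(1)]) (use orb_self[of z3 "loop_step ws0"] ab in auto)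
        then show ?thesis using nsub by simp
      qed
    next
      case False
      then show ?thesis using case_alpha[OF nob False u(1)] nsub by simp
    qed
  qed
  then have bO: "b \<in> Vset n NN Oa" by simp
  have bnd: "1 \<le> posf a b" "posf a b < ellf a" using posf_bounds[OF aV bO ab] by auto
  show ?thesis using main bnd unfolding Pset_def by (cases m) auto
qed

end

context wsctx begin

lemma surg_inst: "a \<in> V n \<Longrightarrow> b \<in> V n \<Longrightarrow> a \<noteq> b \<Longrightarrow> surg n ws a b"
  unfolding surg_def surg_axioms_def using wsctx_axioms by simp

lemma count_a:
  assumes a: "a \<in> V n"
  shows "card {b \<in> V n. b \<noteq> a \<and> splits_small n ws ({a,b},m) k} \<le> 2 * k"
proof -
  let ?S = "{b \<in> V n. b \<noteq> a \<and> splits_small n ws ({a,b},m) k}"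
  let ?O = "Vset n (Suc (length ws)) (orb (loop_step ws0) (a, Suc (length ws), Up))"
  have sub: "?S \<subseteq> ?O - {a}" and img: "posf a ` ?S \<subseteq> Pset m (ellf a) k"
  proof -
    have *: "b \<in> ?O \<and> posf a b \<in> Pset m (ellf a) k" if "b \<in> ?S" for b
      using surg.bad_final[OF surg_inst[of a b], of m k] that a by auto
    show "?S \<subseteq> ?O - {a}" using * by auto
    show "posf a ` ?S \<subseteq> Pset m (ellf a) k" using * by auto
  qed
  have "inj_on (posf a) ?S" using posf_inj[OF a] sub inj_on_subset by blast
  then have "card ?S = card (posf a ` ?S)" by (simp add: card_image)
  also have "\<dots> \<le> card (Pset m (ellf a) k)"
  proof (rule card_mono[OF _ img])
    show "finite (Pset m (ellf a) k)" unfolding Pset_def by (cases m) auto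
  qed
  also have "\<dots> \<le> 2 * k" by (rule card_Pset)
  finally show ?thesis .
qed

lemma finite_V: "finite (V n)" by (simp add: V_def)

lemma E_sub: "e \<in> E n \<Longrightarrow> e \<subseteq> V n \<and> card e = 2"
  unfolding E_def by auto

lemma finite_E: "finite (E n)"
proof -
  have "E n \<subseteq> Pow (V n)" using E_sub by auto
  then show ?thesis using finite_V by (simp add: finite_subset)
qed

lemma count_edges: "card {e \<in> E n. splits_small n ws (e,m) k} \<le> k * n"
proof -
  let ?B = "{e \<in> E n. splits_small n ws (e,m) k}"
  have finB: "finite ?B" using finite_E by simp
  have "2 * card ?B = (\<Sum>e\<in>?B. card e)" using E_sub by simp
  also have "\<dots> = (\<Sum>e\<in>?B. \<Sum>v\<in>V n. if v \<in> e then 1 else 0)"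
  proof (rule sum.cong[OF refl])
    fix e assume "e \<in> ?B"
    then have "e \<subseteq> V n" using E_sub by auto
    then have "{v \<in> V n. v \<in> e} = e" by auto
    moreover have "(\<Sum>v\<in>V n. if v \<in> e then 1 else 0) = card {v \<in> V n. v \<in> e}"
      using sum.inter_filter[OF finite_V, of "\<lambda>_. 1::nat" "\<lambda>v. v \<in> e"] by simp
    ultimately show "card e = (\<Sum>v\<in>V n. if v \<in> e then 1 else 0)" by simp
  qed
  also have "\<dots> = (\<Sum>v\<in>V n. \<Sum>e\<in>?B. if v \<in> e then 1 else 0)" by (rule sum.swap)
  also have "\<dots> = (\<Sum>v\<in>V n. card {e \<in> ?B. v \<in> e})"
    using sum.inter_filter[OF finB, of "\<lambda>_. 1::nat"] by simp
  also have "\<dots> \<le> (\<Sum>v\<in>V n. 2 * k)"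
  proof (rule sum_mono)
    fix v assume v: "v \<in> V n"
    have "{e \<in> ?B. v \<in> e} \<subseteq> (\<lambda>b. {v,b}) ` {b \<in> V n. b \<noteq> v \<and> splits_small n ws ({v,b},m) k}"
    proof
      fix e assume e: "e \<in> {e \<in> ?B. v \<in> e}"
      then obtain x y where xy: "e = {x,y}" "x \<in> V n" "y \<in> V n" "x \<noteq> y" unfolding E_def by auto
      show "e \<in> (\<lambda>b. {v,b}) ` {b \<in> V n. b \<noteq> v \<and> splits_small n ws ({v,b},m) k}"
      proof (cases "v = x")
        case True
        then show ?thesis using e xy by (intro image_eqI[of _ _ y]) auto
      next
        case False
        then have "v = y" using e xy by auto
        then show ?thesis using e xy by (intro image_eqI[of _ _ x]) (auto simp: insert_commute)
      qed
    qed
    then have "card {e \<in> ?B. v \<in> e} \<le> card ((\<lambda>b. {v,b}) ` {b \<in> V n. b \<noteq> v \<and> splits_small n ws ({v,b},m) k})"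
      by (intro card_mono) (auto simp: finite_V)
    also have "\<dots> \<le> card {b \<in> V n. b \<noteq> v \<and> splits_small n ws ({v,b},m) k}" by (rule card_image_le) (simp add: finite_V)
    also have "\<dots> \<le> 2 * k" by (rule count_a[OF v])
    finally show "card {e \<in> ?B. v \<in> e} \<le> 2 * k" .
  qed
  also have "\<dots> = 2 * k * card (V n)" by simp
  also have "card (V n) = n" by (simp add: V_def)
  finally show ?thesis by simp
qed

end

lemma mark_UNIV: "(UNIV :: mark set) = {Cross, Bar}"
  using mark.exhaust by auto

lemma finite_mark: "finite (UNIV :: mark set)" by (simp add: mark_UNIV)

lemma E_eq: "E n = {B. B \<subseteq> V n \<and> card B = 2}"
  unfolding E_def by (auto simp: card_2_iff)

lemma card_E: "2 * card (E n) = n * (n - 1)"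
proof -
  have "card (E n) = n choose 2" unfolding E_eq using n_subsets[of "V n" 2] by (simp add: V_def)
  also have "\<dots> = n * (n - 1) div 2" by (rule choose_two)
  finally have c: "card (E n) = n * (n - 1) div 2" .
  have "even (n * (n - 1))" by (cases "even n") auto
  then show ?thesis using c by simp
qed

theorem lemma2p1:
  fixes n s k :: nat and nu :: real and ws :: "link list"
  assumes "n > 2" and "0 \<le> nu" and "nu < 1"
    and "length ws = s"
    and "set ws \<subseteq> set_pmf (link_pmf n nu)"
  shows "measure_pmf.prob (link_pmf n nu) {l. splits_small n ws l k}
           \<le> 2 * real k / (real n - 1)"
proof -
  let ?M = "map_pmf (\<lambda>b. if b then Cross else Bar) (bernoulli_pmf nu)"
  let ?p = "link_pmf n nu"
  let ?A = "{l. splits_small n ws l k}"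
  have e12: "{1,2} \<in> E n" using assms(1) unfolding E_def V_def by force
  have Ene: "E n \<noteq> {}" using e12 by blast
  have finE: "finite (E n)" using wsctx.finite_E[of n "[]"] by (simp add: wsctx_def valid_def)
  have sp: "set_pmf ?p = E n \<times> set_pmf ?M" unfolding link_pmf_def using Ene finE by simp
  have val: "valid n ws" using assms(5) sp unfolding valid_def by auto
  interpret W: wsctx n ws by unfold_locales (rule val)
  have fin: "finite (E n \<times> (UNIV :: mark set))" using finE finite_mark by simp
  have "measure_pmf.prob ?p ?A = measure_pmf.prob ?p (?A \<inter> set_pmf ?p)"
    by (simp add: measure_Int_set_pmf)
  also have "\<dots> \<le> measure_pmf.prob ?p (?A \<inter> (E n \<times> UNIV))"
    by (rule measure_pmf.finite_measure_mono) (use sp in auto)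
  also have "\<dots> = (\<Sum>x\<in>?A \<inter> (E n \<times> UNIV). pmf ?p x)"
    by (rule measure_measure_pmf_finite) (use fin in auto)
  also have "\<dots> = (\<Sum>x\<in>E n \<times> UNIV. if x \<in> ?A then pmf ?p x else 0)"
    by (subst Int_commute, rule sum.inter_restrict[OF fin])
  also have "\<dots> = (\<Sum>(e,m)\<in>E n \<times> UNIV. if splits_small n ws (e,m) k then pmf ?M m / card (E n) else 0)"
    by (rule sum.cong[OF refl]) (auto simp: link_pmf_def pmf_pair Ene finE)
  also have "\<dots> = (\<Sum>e\<in>E n. \<Sum>m\<in>UNIV. if splits_small n ws (e,m) k then pmf ?M m / card (E n) else 0)"
    by (rule sum.cartesian_product[symmetric])
  also have "\<dots> = (\<Sum>m\<in>UNIV. \<Sum>e\<in>E n. if splits_small n ws (e,m) k then pmf ?M m / card (E n) else 0)"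
    by (rule sum.swap)
  also have "\<dots> = (\<Sum>m\<in>UNIV. real (card {e \<in> E n. splits_small n ws (e,m) k}) * (pmf ?M m / card (E n)))"
  proof (rule sum.cong[OF refl])
    fix m
    show "(\<Sum>e\<in>E n. if splits_small n ws (e,m) k then pmf ?M m / card (E n) else 0) =
      real (card {e \<in> E n. splits_small n ws (e,m) k}) * (pmf ?M m / card (E n))"
      using sum.inter_filter[OF finE, of "\<lambda>_. pmf ?M m / card (E n)" "\<lambda>e. splits_small n ws (e,m) k"]
      by simp
  qed
  also have "\<dots> \<le> (\<Sum>m\<in>UNIV. real (k * n) * (pmf ?M m / card (E n)))"
  proof (rule sum_mono)
    fix m
    have "real (card {e \<in> E n. splits_small n ws (e,m) k}) \<le> real (k * n)"
      using W.count_edges[of m k] by (simp only: of_nat_le_iff)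
    then show "real (card {e \<in> E n. splits_small n ws (e,m) k}) * (pmf ?M m / card (E n)) \<le>
      real (k * n) * (pmf ?M m / card (E n))"
      by (rule mult_right_mono) simp
  qed
  also have "\<dots> = real (k * n) / card (E n) * (\<Sum>m\<in>UNIV. pmf ?M m)"
    by (simp add: sum_distrib_left)
  also have "(\<Sum>m\<in>UNIV. pmf ?M m) = 1" by (rule sum_pmf_eq_1) (simp_all add: finite_mark)
  also have "real (k * n) / card (E n) * 1 = 2 * real k / (real n - 1)"
  proof -
    have h1: "real (2 * card (E n)) = real (n * (n - 1))" by (simp only: card_E)
    have h2: "real (n * (n - 1)) = real n * (real n - 1)" using assms(1) by (simp add: of_nat_diff)
    have cE: "2 * real (card (E n)) = real n * (real n - 1)" using h1 h2 by simp
    have n1: "real n - 1 > 0" using assms(1) by simp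
    have c0: "real (card (E n)) > 0" using finE Ene by (simp add: card_gt_0_iff)
    have cd: "real (card (E n)) = real n * (real n - 1) / 2" using cE by simp
    have np: "real n > 0" using assms(1) by simp
    show ?thesis unfolding cd using n1 np by (simp add: field_simps)
  qed
  finally show ?thesis .
qed

end
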